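(* For $m\ge0$ let $\mathrm{Split}_m(t)=\sum_{n\ge0}w_{\mathfrak{sl}_2}((K_m,n))t^n$. Then $$\mathrm{Split}_m(t)=\frac{w_{\mathfrak{sl}_2}(K_m)+t\sum_{i=0}^{m-1}(-1)^{m-i}u_{i,m}(c)\,\mathrm{Split}_i(t)}{1-\big(c-\frac{m(m+1)}2\big)t}.$$
   Context: Let $c=x_1^2+x_2^2+x_3^2$ be the Casimir of $U(\mathfrak{sl}_2)$ for $x_1=\tfrac12\begin{pmatrix}0&1\\1&0\end{pmatrix}$, $x_2=\tfrac12\begin{pmatrix}0&-i\\ i&0\end{pmatrix}$, $x_3=\tfrac12\begin{pmatrix}1&0\\0&-1\end{pmatrix}$. For a chord diagram $D$, $w_{\mathfrak{sl}_2}(D)=\sum_\varphi x_{\varphi(p_1)}\cdots x_{\varphi(p_{2n})}\in\mathbb C[c]$ ($p_i$ the endpoints in order from a cut point, $\varphi$ over maps chords$\to\{1,2,3\}$); it depends only on the intersection graph and hence is defined on intersection graphs. $K_m$ is the complete graph on $m$ vertices, and $(K_m,n)$ is the join of $K_m$ with the edgeless graph on $n$ vertices (a complete split graph, an intersection graph). The polynomials $u_{i,m}(c)$ are defined by $\sum_{m\ge0}\sum_{i=0}^m u_{i,m}(c)y^it^m=\frac1{1-yt}\Big(c+\frac{c^2t^2-yt}{1-(2y-1)t-(2c-y^2-y)t^2}\Big)$. *)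

theory Defs
  imports Complex_Main "HOL-Computational_Algebra.Polynomial" "HOL-Computational_Algebra.Formal_Power_Series" "HOL-Library.FuncSet"
begin

text \<open>Free associative algebra on generators x_1,x_2,x_3 over the complex numbers:
  an element is a function from words (lists of generator indices) to coefficients.
  Elements of the polynomial free algebra are those with finite support.\<close>

type_synonym fa = "nat list \<Rightarrow> complex"

definition fa_fin :: "fa \<Rightarrow> bool" where
  "fa_fin a \<longleftrightarrow> finite {w. a w \<noteq> 0}"

definition fa_add :: "fa \<Rightarrow> fa \<Rightarrow> fa" where
  "fa_add a b = (\<lambda>w. a w + b w)"

definition fa_sub :: "fa \<Rightarrow> fa \<Rightarrow> fa" where
  "fa_sub a b = (\<lambda>w. a w - b w)"

definition fa_scal :: "complex \<Rightarrow> fa \<Rightarrow> fa" where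
  "fa_scal z a = (\<lambda>w. z * a w)"

definition fa_mult :: "fa \<Rightarrow> fa \<Rightarrow> fa" where
  "fa_mult a b = (\<lambda>w. \<Sum>k\<le>length w. a (take k w) * b (drop k w))"

definition fa_mono :: "nat list \<Rightarrow> fa" where
  "fa_mono u = (\<lambda>w. if w = u then 1 else 0)"

definition fa_one :: fa where
  "fa_one = fa_mono []"

definition fa_gen :: "nat \<Rightarrow> fa" where
  "fa_gen j = fa_mono [j]"

primrec fa_pow :: "fa \<Rightarrow> nat \<Rightarrow> fa" where
  "fa_pow a 0 = fa_one"
| "fa_pow a (Suc k) = fa_mult a (fa_pow a k)"

text \<open>Commutation relations of sl_2 in the basis x_1,x_2,x_3 (x_j = sigma_j / 2):
  [x_1,x_2] = i x_3, [x_2,x_3] = i x_1, [x_3,x_1] = i x_2.\<close>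

definition sl2_triples :: "(nat \<times> nat \<times> nat) set" where
  "sl2_triples = {(1,2,3), (2,3,1), (3,1,2)}"

definition sl2_rel :: "nat \<Rightarrow> nat \<Rightarrow> nat \<Rightarrow> fa" where
  "sl2_rel p q r = fa_sub (fa_sub (fa_mult (fa_gen p) (fa_gen q)) (fa_mult (fa_gen q) (fa_gen p)))
                          (fa_scal \<i> (fa_gen r))"

text \<open>Two-sided ideal of the free algebra generated by the relations; U(sl_2) is the quotient.\<close>

inductive_set sl2_ideal :: "fa set" where
  zero: "(\<lambda>_. 0) \<in> sl2_ideal"
| gen: "fa_fin a \<Longrightarrow> fa_fin b \<Longrightarrow> (p, q, r) \<in> sl2_triples \<Longrightarrow>
          fa_mult (fa_mult a (sl2_rel p q r)) b \<in> sl2_ideal"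
| add: "x \<in> sl2_ideal \<Longrightarrow> y \<in> sl2_ideal \<Longrightarrow> fa_add x y \<in> sl2_ideal"

definition U_eq :: "fa \<Rightarrow> fa \<Rightarrow> bool" where
  "U_eq a b \<longleftrightarrow> fa_sub a b \<in> sl2_ideal"

definition casimir :: fa where
  "casimir = fa_add (fa_add (fa_mult (fa_gen 1) (fa_gen 1)) (fa_mult (fa_gen 2) (fa_gen 2)))
                    (fa_mult (fa_gen 3) (fa_gen 3))"

definition eval_c :: "complex poly \<Rightarrow> fa" where
  "eval_c p = (\<lambda>w. \<Sum>k\<le>degree p. coeff p k * fa_pow casimir k w)"

text \<open>Chord diagrams are given by words: the sequence of chord labels read along the
  line from the cut point, each label occurring exactly twice.
  w_sl2(D) = sum over phi : chords -> {1,2,3} of x_{phi(p_1)} ... x_{phi(p_2n)}.\<close>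

definition w_sl2 :: "nat list \<Rightarrow> fa" where
  "w_sl2 d = (\<lambda>v. \<Sum>\<phi>\<in>PiE (set d) (\<lambda>_. {1,2,3::nat}). if map \<phi> d = v then 1 else 0)"

text \<open>A chord diagram whose intersection graph is the complete split graph (K_m, n):
  chords 0..m-1 pairwise crossing; chords m..m+n-1 crossing every chord of K_m and
  none of each other.\<close>

definition split_diag :: "nat \<Rightarrow> nat \<Rightarrow> nat list" where
  "split_diag m n = [0..<m] @ map ((+) m) [0..<n] @ [0..<m] @ rev (map ((+) m) [0..<n])"

definition complete_diag :: "nat \<Rightarrow> nat list" where
  "complete_diag m = [0..<m] @ [0..<m]"

text \<open>The polynomials u_{i,m}(c): the generating function lives in C[c][y][[t]]
  (type complex poly poly fps: y = outer polynomial variable, c = inner one).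
  Since the denominator (1-yt)(1-(2y-1)t-(2c-y^2-y)t^2) has constant term 1, the series
  is the unique F with  denominator * F = numerator.\<close>

definition pc :: "complex poly poly" where "pc = [:[:0, 1:]:]"
definition py :: "complex poly poly" where "py = [:0, 1:]"

definition u_den :: "complex poly poly fps" where
  "u_den = 1 - fps_const (2 * py - 1) * fps_X - fps_const (2 * pc - py^2 - py) * fps_X ^ 2"

definition u_series :: "complex poly poly fps" where
  "u_series = (THE F. (1 - fps_const py * fps_X) * u_den * F
                 = fps_const pc * u_den + fps_const (pc^2) * fps_X ^ 2 - fps_const py * fps_X)"

definition u_poly :: "nat \<Rightarrow> nat \<Rightarrow> complex poly" where
  "u_poly i m = coeff (fps_nth u_series m) i"

end

theory Submission
  imports Defs "HOL-Library.Poly_Mapping" "HOL-Library.Product_Plus"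
begin

datatype wd = Wd (unwd: "nat list")

instantiation wd :: monoid_add
begin
definition zero_wd :: wd where "zero_wd = Wd []"
definition plus_wd :: "wd \<Rightarrow> wd \<Rightarrow> wd" where "plus_wd a b = Wd (unwd a @ unwd b)"
instance by standard (auto simp: zero_wd_def plus_wd_def)
end

lemma Wd_plus[simp]: "Wd a + Wd b = Wd (a @ b)" by (simp add: plus_wd_def)

type_synonym F = "wd \<Rightarrow>\<^sub>0 complex"

definition tofa :: "F \<Rightarrow> fa" where "tofa p = (\<lambda>w. Poly_Mapping.lookup p (Wd w))"

lemma pm_update_eq: "k \<notin> Poly_Mapping.keys f \<Longrightarrow> Poly_Mapping.update k v f = f + Poly_Mapping.single k v"
  by (rule poly_mapping_eqI) (auto simp: lookup_update lookup_add lookup_single when_def in_keys_iff)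

lemma pm_induct[case_names zero single add]:
  assumes "P 0" "\<And>k a. P (Poly_Mapping.single k a)" "\<And>f g. P f \<Longrightarrow> P g \<Longrightarrow> P (f + g)"
  shows "P f"
proof (induction f rule: update_induct)
  case const then show ?case using assms(1) .
next
  case (update a b f) then show ?case using assms(2,3) by (simp add: pm_update_eq)
qed

lemma tofa_0[simp]: "tofa 0 = (\<lambda>_. 0)" by (simp add: tofa_def)
lemma tofa_add: "tofa (p + q) = fa_add (tofa p) (tofa q)"
  by (simp add: tofa_def fa_add_def lookup_add)
lemma tofa_minus: "tofa (p - q) = fa_sub (tofa p) (tofa q)"
  by (simp add: tofa_def fa_sub_def lookup_minus)

lemma fa_mult_add_left: "fa_mult (fa_add a b) c = fa_add (fa_mult a c) (fa_mult b c)"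
  by (simp add: fa_mult_def fa_add_def algebra_simps sum.distrib)
lemma fa_mult_add_right: "fa_mult c (fa_add a b) = fa_add (fa_mult c a) (fa_mult c b)"
  by (simp add: fa_mult_def fa_add_def algebra_simps sum.distrib)
lemma fa_mult_zero_left[simp]: "fa_mult (\<lambda>_. 0) c = (\<lambda>_. 0)"
  by (simp add: fa_mult_def)
lemma fa_mult_zero_right[simp]: "fa_mult c (\<lambda>_. 0) = (\<lambda>_. 0)"
  by (simp add: fa_mult_def)

lemma take_drop_iff:
  assumes "k \<le> length w"
  shows "(take k w = us \<and> drop k w = vs) \<longleftrightarrow> (w = us @ vs \<and> k = length us)"
  using assms by (auto simp: min_def)

lemma tofa_mult_single:
  "tofa (Poly_Mapping.single u a * Poly_Mapping.single v b)
   = fa_mult (tofa (Poly_Mapping.single u a)) (tofa (Poly_Mapping.single v b))"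
proof -
  obtain us vs where u: "u = Wd us" and v: "v = Wd vs" by (cases u, cases v) auto
  show ?thesis
  proof (rule ext)
    fix w
    have "fa_mult (tofa (Poly_Mapping.single u a)) (tofa (Poly_Mapping.single v b)) w
        = (\<Sum>k\<le>length w. if k = length us \<and> w = us @ vs then a * b else 0)"
      unfolding fa_mult_def tofa_def u v
      by (rule sum.cong) (auto simp: lookup_single when_def min_def)
    also have "\<dots> = (if w = us @ vs then a * b else 0)"
      by (simp add: sum.delta' conj_commute)
    finally have e: "fa_mult (tofa (Poly_Mapping.single u a)) (tofa (Poly_Mapping.single v b)) w
        = (if w = us @ vs then a * b else 0)" .
    show "tofa (Poly_Mapping.single u a * Poly_Mapping.single v b) w
        = fa_mult (tofa (Poly_Mapping.single u a)) (tofa (Poly_Mapping.single v b)) w"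
      unfolding e by (auto simp: tofa_def mult_single u v lookup_single when_def)
  qed
qed

lemma tofa_mult: "tofa (p * q) = fa_mult (tofa p) (tofa q)"
proof (induction p rule: pm_induct)
  case zero then show ?case by simp
next
  case (add f g) then show ?case by (simp add: distrib_right tofa_add fa_mult_add_left)
next
  case (single k a)
  show ?case
  proof (induction q rule: pm_induct)
    case zero then show ?case by simp
  next
    case (add f g) then show ?case by (simp add: distrib_left tofa_add fa_mult_add_right)
  next
    case (single k' b) then show ?case by (rule tofa_mult_single)
  qed
qed

definition sc :: "'c::comm_ring_1 \<Rightarrow> ('k::monoid_add \<Rightarrow>\<^sub>0 'c)" where
  "sc z = Poly_Mapping.single 0 z"

lemma sc_comm: "sc z * p = p * sc z"
proof (induction p rule: pm_induct)
  case (single k a) show ?case by (simp add: sc_def mult_single mult.commute)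
qed (simp_all add: distrib_left distrib_right)

lemma sc_mult: "sc a * sc b = sc (a * b)" by (simp add: sc_def mult_single)
lemma sc_add: "sc a + sc b = sc (a + b)" by (simp add: sc_def single_add)
lemma sc_1[simp]: "sc 1 = 1" by (simp add: sc_def)
lemma sc_0[simp]: "sc 0 = 0" by (simp add: sc_def)
lemma sc_minus: "sc (- a) = - sc a" by (simp add: sc_def single_uminus)
lemma sc_left_comm: "p * (sc z * q) = sc z * (p * q)"
  by (metis mult.assoc sc_comm)

definition XX :: "nat \<Rightarrow> F" where "XX a = Poly_Mapping.single (Wd [a]) 1"

definition good :: "wd \<Rightarrow> bool" where "good k \<longleftrightarrow> set (unwd k) \<subseteq> {1,2,3}"

lemma good_plus[simp]: "good (u + v) \<longleftrightarrow> good u \<and> good v"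
  by (cases u; cases v) (auto simp: good_def)
lemma good_0[simp]: "good 0" by (simp add: good_def zero_wd_def)

definition pr :: "F \<Rightarrow> F" where
  "pr p = Abs_poly_mapping (\<lambda>k. if good k then Poly_Mapping.lookup p k else 0)"

lemma lookup_pr: "Poly_Mapping.lookup (pr p) k = (if good k then Poly_Mapping.lookup p k else 0)"
proof -
  have "finite {k. (if good k then Poly_Mapping.lookup p k else 0) \<noteq> 0}"
    by (rule finite_subset[OF _ finite_keys[of p]]) (auto simp: in_keys_iff)
  then show ?thesis by (simp add: pr_def)
qed

lemma pr_add: "pr (p + q) = pr p + pr q"
  by (rule poly_mapping_eqI) (simp add: lookup_pr lookup_add)
lemma pr_0[simp]: "pr 0 = 0"
  by (rule poly_mapping_eqI) (simp add: lookup_pr)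
lemma pr_single: "pr (Poly_Mapping.single k a) = (if good k then Poly_Mapping.single k a else 0)"
  by (rule poly_mapping_eqI) (auto simp: lookup_pr lookup_single when_def)
lemma pr_minus: "pr (p - q) = pr p - pr q"
  by (rule poly_mapping_eqI) (simp add: lookup_pr lookup_minus)
lemma pr_uminus: "pr (- p) = - pr p"
  by (rule poly_mapping_eqI) (simp add: lookup_pr)

lemma pr_mult: "pr (p * q) = pr p * pr q"
proof (induction p rule: pm_induct)
  case (single k a)
  show ?case
  proof (induction q rule: pm_induct)
    case (single k' b) show ?case by (simp add: pr_single mult_single)
  qed (simp_all add: distrib_left pr_add)
qed (simp_all add: distrib_right pr_add)

lemma pr_1[simp]: "pr 1 = 1"
  by (metis pr_single good_0 one_poly_mapping.abs_eq single_one)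

lemma pr_sc[simp]: "pr (sc z) = sc z" by (simp add: sc_def pr_single)
lemma pr_XX[simp]: "a \<in> {1,2,3} \<Longrightarrow> pr (XX a) = XX a"
  by (auto simp: XX_def pr_single good_def)
lemma pr_pr[simp]: "pr (pr p) = pr p"
  by (rule poly_mapping_eqI) (simp add: lookup_pr)
lemma pr_power: "pr (p ^ n) = pr p ^ n"
  by (induction n) (simp_all add: pr_mult)
lemma pr_sum: "pr (sum f S) = sum (\<lambda>x. pr (f x)) S"
  by (induction S rule: infinite_finite_induct) (simp_all add: pr_add)

lemma fa_fin_tofa: "fa_fin (tofa p)"
proof -
  have "{w. tofa p w \<noteq> 0} = Wd -` Poly_Mapping.keys p"
    by (auto simp: tofa_def in_keys_iff)
  then show ?thesis unfolding fa_fin_def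
    by (metis finite_keys finite_vimageI injI wd.inject)
qed

lemma ex_tofa: assumes "fa_fin a" shows "\<exists>p. tofa p = a"
proof -
  have fin: "finite {k. a (unwd k) \<noteq> 0}"
  proof -
    have "{k. a (unwd k) \<noteq> 0} = Wd ` {w. a w \<noteq> 0}"
      by (auto simp: image_iff) (metis wd.collapse)
    then show ?thesis using assms by (simp add: fa_fin_def)
  qed
  show ?thesis
    by (rule exI[of _ "Abs_poly_mapping (\<lambda>k. a (unwd k))"]) (simp add: tofa_def fin)
qed

lemma fa_mult_assoc:
  assumes "fa_fin a" "fa_fin b" "fa_fin c"
  shows "fa_mult (fa_mult a b) c = fa_mult a (fa_mult b c)"
proof -
  obtain p q r where "a = tofa p" "b = tofa q" "c = tofa r" using assms ex_tofa by metis
  then show ?thesis by (simp flip: tofa_mult add: mult.assoc)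
qed

definition Rel :: "nat \<Rightarrow> nat \<Rightarrow> nat \<Rightarrow> F" where
  "Rel p q r = XX p * XX q - XX q * XX p - sc \<i> * XX r"

lemma tofa_XX: "tofa (XX a) = fa_gen a"
  by (auto simp: tofa_def XX_def fa_gen_def fa_mono_def lookup_single when_def)
lemma lookup_sc_mult: "Poly_Mapping.lookup (sc z * p) k = z * Poly_Mapping.lookup p k"
proof (induction p rule: pm_induct)
  case (single k' a) show ?case by (simp add: sc_def mult_single lookup_single when_def)
qed (simp_all add: distrib_left lookup_add)

lemma tofa_sc_mult: "tofa (sc z * p) = fa_scal z (tofa p)"
  by (simp add: tofa_def fa_scal_def lookup_sc_mult)

lemma tofa_Rel: "tofa (Rel p q r) = sl2_rel p q r"
  unfolding Rel_def tofa_minus tofa_sc_mult by (simp add: sl2_rel_def tofa_mult tofa_XX)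



definition IF :: "F set" where "IF = {p. tofa p \<in> sl2_ideal}"

lemma sl2_ideal_mult:
  assumes "x \<in> sl2_ideal"
  shows "fa_mult (fa_mult (tofa u) x) (tofa v) \<in> sl2_ideal"
  using assms
proof (induction arbitrary: u v)
  case zero
  then show ?case using sl2_ideal.zero by simp
next
  case (gen a b p q r)
  obtain A B where A: "tofa A = a" and B: "tofa B = b" using gen ex_tofa by metis
  define R where "R = Rel p q r"
  have R: "tofa R = sl2_rel p q r" by (simp add: R_def tofa_Rel)
  have "fa_mult (fa_mult (tofa u) (fa_mult (fa_mult a (sl2_rel p q r)) b)) (tofa v)
      = tofa (u * (A * R * B) * v)" by (simp only: tofa_mult A B R)
  also have "\<dots> = tofa ((u * A) * R * (B * v))" by (simp add: mult.assoc)
  also have "\<dots> = fa_mult (fa_mult (tofa (u * A)) (sl2_rel p q r)) (tofa (B * v))"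
    by (simp only: tofa_mult A B R)
  finally show ?case using sl2_ideal.gen[OF fa_fin_tofa fa_fin_tofa gen(3)] by simp
next
  case (add x y)
  then show ?case
    by (simp add: fa_mult_add_left fa_mult_add_right sl2_ideal.add)
qed

lemma IF_mult: "p \<in> IF \<Longrightarrow> u * p * v \<in> IF"
  unfolding IF_def using sl2_ideal_mult by (simp add: tofa_mult)
lemma IF_add: "p \<in> IF \<Longrightarrow> q \<in> IF \<Longrightarrow> p + q \<in> IF"
  unfolding IF_def by (simp add: tofa_add sl2_ideal.add)
lemma IF_0: "0 \<in> IF"
  unfolding IF_def using sl2_ideal.zero by simp
lemma IF_uminus: "p \<in> IF \<Longrightarrow> - p \<in> IF"
  using IF_mult[of p "-1" 1] by simp
lemma IF_diff: "p \<in> IF \<Longrightarrow> q \<in> IF \<Longrightarrow> p - q \<in> IF"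
  using IF_add IF_uminus by (metis diff_conv_add_uminus)

lemma Rel_IF: "(p, q, r) \<in> sl2_triples \<Longrightarrow> Rel p q r \<in> IF"
proof -
  assume t: "(p, q, r) \<in> sl2_triples"
  have "tofa (Rel p q r) = fa_mult (fa_mult (tofa 1) (sl2_rel p q r)) (tofa 1)"
    by (simp flip: tofa_mult tofa_Rel)
  then show ?thesis unfolding IF_def
    using sl2_ideal.gen[OF fa_fin_tofa fa_fin_tofa t] by simp
qed

definition IFg :: "F set" where "IFg = {p. pr p \<in> IF}"

lemma IFg_mult: "p \<in> IFg \<Longrightarrow> u * p * v \<in> IFg"
  unfolding IFg_def by (simp add: pr_mult IF_mult)
lemma IFg_add: "p \<in> IFg \<Longrightarrow> q \<in> IFg \<Longrightarrow> p + q \<in> IFg"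
  unfolding IFg_def by (simp add: pr_add IF_add)
lemma IFg_0[simp]: "0 \<in> IFg"
  unfolding IFg_def by (simp add: IF_0)
lemma IFg_uminus: "p \<in> IFg \<Longrightarrow> - p \<in> IFg"
  unfolding IFg_def by (simp add: pr_uminus IF_uminus)
lemma IFg_diff: "p \<in> IFg \<Longrightarrow> q \<in> IFg \<Longrightarrow> p - q \<in> IFg"
  unfolding IFg_def by (simp add: pr_minus IF_diff)
lemma IFg_multL: "p \<in> IFg \<Longrightarrow> u * p \<in> IFg"
  using IFg_mult[of p u 1] by simp
lemma IFg_multR: "p \<in> IFg \<Longrightarrow> p * v \<in> IFg"
  using IFg_mult[of p 1 v] by simp
lemma IFg_sum: "(\<And>x. x \<in> S \<Longrightarrow> f x \<in> IFg) \<Longrightarrow> sum f S \<in> IFg"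
  by (induction S rule: infinite_finite_induct) (auto intro: IFg_add)

lemma pr_Rel: "p \<in> {1,2,3} \<Longrightarrow> q \<in> {1,2,3} \<Longrightarrow> r \<in> {1,2,3} \<Longrightarrow> pr (Rel p q r) = Rel p q r"
  by (simp add: Rel_def pr_minus pr_mult)

lemma Rel_IFg: "(p, q, r) \<in> sl2_triples \<Longrightarrow> Rel p q r \<in> IFg"
  unfolding IFg_def using Rel_IF by (auto simp: sl2_triples_def pr_Rel)

definition CC :: F where "CC = XX 1 * XX 1 + XX 2 * XX 2 + XX 3 * XX 3"

lemma pr_CC[simp]: "pr CC = CC" by (simp add: CC_def pr_add pr_mult)

lemma CC_X1: "CC * XX 1 - XX 1 * CC = - (XX 2 * Rel 1 2 3) - Rel 1 2 3 * XX 2 + XX 3 * Rel 3 1 2 + Rel 3 1 2 * XX 3"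
  by (simp add: CC_def Rel_def algebra_simps sc_left_comm)
lemma CC_X2: "CC * XX 2 - XX 2 * CC = - (XX 3 * Rel 2 3 1) - Rel 2 3 1 * XX 3 + XX 1 * Rel 1 2 3 + Rel 1 2 3 * XX 1"
  by (simp add: CC_def Rel_def algebra_simps sc_left_comm)
lemma CC_X3: "CC * XX 3 - XX 3 * CC = - (XX 1 * Rel 3 1 2) - Rel 3 1 2 * XX 1 + XX 2 * Rel 2 3 1 + Rel 2 3 1 * XX 2"
  by (simp add: CC_def Rel_def algebra_simps sc_left_comm)

lemma tr: "(1::nat,2::nat,3::nat) \<in> sl2_triples" "(2::nat,3::nat,1::nat) \<in> sl2_triples" "(3::nat,1::nat,2::nat) \<in> sl2_triples"
  by (auto simp: sl2_triples_def)

lemma CC_XX: assumes "a \<in> {1,2,3}" shows "CC * XX a - XX a * CC \<in> IFg"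
proof -
  have R: "Rel 1 2 3 \<in> IFg" "Rel 2 3 1 \<in> IFg" "Rel 3 1 2 \<in> IFg"
    using Rel_IFg[OF tr(1)] Rel_IFg[OF tr(2)] Rel_IFg[OF tr(3)] by auto
  have L: "x * Rel 1 2 3 \<in> IFg" "x * Rel 2 3 1 \<in> IFg" "x * Rel 3 1 2 \<in> IFg" for x
    using R by (auto intro: IFg_multL)
  have Rr: "Rel 1 2 3 * x \<in> IFg" "Rel 2 3 1 * x \<in> IFg" "Rel 3 1 2 * x \<in> IFg" for x
    using R by (auto intro: IFg_multR)
  from assms consider "a = 1" | "a = 2" | "a = 3" by auto
  then show ?thesis
  proof cases
    case 1 show ?thesis unfolding 1 CC_X1 by (intro IFg_add IFg_diff IFg_uminus L Rr)
  next
    case 2 show ?thesis unfolding 2 CC_X2 by (intro IFg_add IFg_diff IFg_uminus L Rr)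
  next
    case 3 show ?thesis unfolding 3 CC_X3 by (intro IFg_add IFg_diff IFg_uminus L Rr)
  qed
qed

lemma CC_word: "set w \<subseteq> {1,2,3} \<Longrightarrow> CC * Poly_Mapping.single (Wd w) a - Poly_Mapping.single (Wd w) a * CC \<in> IFg"
proof (induction w)
  case Nil
  have "Poly_Mapping.single (Wd []) a = sc a" by (simp add: sc_def zero_wd_def)
  then show ?case by (simp add: sc_comm)
next
  case (Cons x w)
  have e: "Poly_Mapping.single (Wd (x # w)) a = XX x * Poly_Mapping.single (Wd w) a"
    by (simp add: XX_def mult_single)
  have "CC * (XX x * Poly_Mapping.single (Wd w) a) - (XX x * Poly_Mapping.single (Wd w) a) * CC
     = (CC * XX x - XX x * CC) * Poly_Mapping.single (Wd w) a + XX x * (CC * Poly_Mapping.single (Wd w) a - Poly_Mapping.single (Wd w) a * CC)"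
    by (simp add: algebra_simps)
  moreover have "\<dots> \<in> IFg"
  proof (rule IFg_add)
    show "(CC * XX x - XX x * CC) * Poly_Mapping.single (Wd w) a \<in> IFg"
      using Cons.prems CC_XX[of x] by (auto intro: IFg_multR)
    show "XX x * (CC * Poly_Mapping.single (Wd w) a - Poly_Mapping.single (Wd w) a * CC) \<in> IFg"
      using Cons by (auto intro: IFg_multL)
  qed
  ultimately show ?case by (simp add: e)
qed

lemma CC_central: "CC * p - p * CC \<in> IFg"
proof -
  have "CC * pr p - pr p * CC \<in> IFg"
  proof (induction p rule: pm_induct)
    case (single k a)
    show ?case
    proof (cases "good k")
      case True
      then obtain w where "k = Wd w" "set w \<subseteq> {1,2,3}" by (cases k) (auto simp: good_def)
      then show ?thesis using CC_word by (simp add: pr_single)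
    qed (simp add: pr_single)
  next
    case (add f g)
    have "CC * pr (f + g) - pr (f + g) * CC = (CC * pr f - pr f * CC) + (CC * pr g - pr g * CC)"
      by (simp add: pr_add algebra_simps)
    then show ?case using add by (simp add: IFg_add)
  qed simp
  then show ?thesis unfolding IFg_def by (simp add: pr_minus pr_mult)
qed

definition Om1 :: "F \<Rightarrow> F" where
  "Om1 p = XX 1 * p * XX 1 + XX 2 * p * XX 2 + XX 3 * p * XX 3"

definition Om :: "nat \<Rightarrow> F \<Rightarrow> F" where "Om n = Om1 ^^ n"

lemma Om1_add: "Om1 (p + q) = Om1 p + Om1 q" by (simp add: Om1_def algebra_simps)
lemma Om1_diff: "Om1 (p - q) = Om1 p - Om1 q" by (simp add: Om1_def algebra_simps)
lemma Om1_0[simp]: "Om1 0 = 0" by (simp add: Om1_def)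
lemma Om1_sc: "Om1 (sc z * p) = sc z * Om1 p" by (simp add: Om1_def algebra_simps sc_left_comm)
lemma Om_add: "Om n (p + q) = Om n p + Om n q" by (induction n) (simp_all add: Om_def Om1_add)
lemma Om_diff: "Om n (p - q) = Om n p - Om n q" by (induction n) (simp_all add: Om_def Om1_diff)
lemma Om_0[simp]: "Om n 0 = 0" by (induction n) (simp_all add: Om_def)
lemma Om_sc: "Om n (sc z * p) = sc z * Om n p" by (induction n) (simp_all add: Om_def Om1_sc)
lemma Om_sum: "Om n (sum f S) = (\<Sum>x\<in>S. Om n (f x))"
  by (induction S rule: infinite_finite_induct) (simp_all add: Om_add)
lemma Om_Suc: "Om (Suc n) p = Om n (Om1 p)" unfolding Om_def funpow_Suc_right by simp
lemma Om_Suc': "Om (Suc n) p = Om1 (Om n p)" by (simp add: Om_def)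

lemma Om1_IFg: "p \<in> IFg \<Longrightarrow> Om1 p \<in> IFg" unfolding Om1_def by (intro IFg_add IFg_mult)
lemma Om_IFg: "p \<in> IFg \<Longrightarrow> Om n p \<in> IFg" by (induction n) (simp_all add: Om_Suc' Om1_IFg Om_def)

lemma Om1_CC: "Om1 (CC * p) - CC * Om1 p \<in> IFg"
proof -
  have "Om1 (CC * p) - CC * Om1 p = (XX 1 * CC - CC * XX 1) * p * XX 1 + (XX 2 * CC - CC * XX 2) * p * XX 2
     + (XX 3 * CC - CC * XX 3) * p * XX 3"
    by (simp add: Om1_def algebra_simps)
  moreover have "XX a * CC - CC * XX a \<in> IFg" for a
    using IFg_uminus[OF CC_central[of "XX a"]] by simp
  ultimately show ?thesis by (simp add: IFg_add IFg_multR)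
qed

lemma Om_CC: "Om n (CC * p) - CC * Om n p \<in> IFg"
proof (induction n)
  case (Suc n)
  have "Om (Suc n) (CC * p) - CC * Om (Suc n) p = Om1 (Om n (CC * p) - CC * Om n p) + (Om1 (CC * Om n p) - CC * Om1 (Om n p))"
    by (simp add: Om_Suc' Om1_diff)
  then show ?case using Suc Om1_IFg Om1_CC by (simp add: IFg_add)
qed (simp add: Om_def)

type_synonym F2 = "(wd \<times> wd) \<Rightarrow>\<^sub>0 complex"

lemma single_sc: "Poly_Mapping.single k z = sc z * Poly_Mapping.single k 1"
  by (simp add: sc_def mult_single)

definition L1 :: "F \<Rightarrow> F2" where
  "L1 p = Abs_poly_mapping (\<lambda>(u, v). if v = 0 then Poly_Mapping.lookup p u else 0)"
definition L2 :: "F \<Rightarrow> F2" where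
  "L2 p = Abs_poly_mapping (\<lambda>(u, v). if u = 0 then Poly_Mapping.lookup p v else 0)"

lemma lookup_L1: "Poly_Mapping.lookup (L1 p) = (\<lambda>(u, v). if v = 0 then Poly_Mapping.lookup p u else 0)"
proof -
  have "finite {k. (\<lambda>(u, v). if v = 0 then Poly_Mapping.lookup p u else 0) k \<noteq> 0}"
    by (rule finite_subset[of _ "(\<lambda>u. (u, 0)) ` Poly_Mapping.keys p"]) (auto simp: in_keys_iff split: if_splits)
  then show ?thesis unfolding L1_def by (rule lookup_Abs_poly_mapping)
qed
lemma lookup_L2: "Poly_Mapping.lookup (L2 p) = (\<lambda>(u, v). if u = 0 then Poly_Mapping.lookup p v else 0)"
proof -
  have "finite {k. (\<lambda>(u, v). if u = 0 then Poly_Mapping.lookup p v else 0) k \<noteq> 0}"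
    by (rule finite_subset[of _ "(\<lambda>v. (0, v)) ` Poly_Mapping.keys p"]) (auto simp: in_keys_iff split: if_splits)
  then show ?thesis unfolding L2_def by (rule lookup_Abs_poly_mapping)
qed

lemma L1_add: "L1 (p + q) = L1 p + L1 q"
  by (rule poly_mapping_eqI) (auto simp: lookup_L1 lookup_add)
lemma L2_add: "L2 (p + q) = L2 p + L2 q"
  by (rule poly_mapping_eqI) (auto simp: lookup_L2 lookup_add)
lemma L1_0[simp]: "L1 0 = 0" by (rule poly_mapping_eqI) (auto simp: lookup_L1)
lemma L2_0[simp]: "L2 0 = 0" by (rule poly_mapping_eqI) (auto simp: lookup_L2)
lemma L1_single: "L1 (Poly_Mapping.single u a) = Poly_Mapping.single (u, 0) a"
  by (rule poly_mapping_eqI) (auto simp: lookup_L1 lookup_single when_def split: if_splits)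
lemma L2_single: "L2 (Poly_Mapping.single u a) = Poly_Mapping.single (0, u) a"
  by (rule poly_mapping_eqI) (auto simp: lookup_L2 lookup_single when_def split: if_splits)
lemma L1_uminus: "L1 (- p) = - L1 p"
  by (rule poly_mapping_eqI) (auto simp: lookup_L1)
lemma L2_uminus: "L2 (- p) = - L2 p"
  by (rule poly_mapping_eqI) (auto simp: lookup_L2)
lemma L1_diff: "L1 (p - q) = L1 p - L1 q"
  by (rule poly_mapping_eqI) (auto simp: lookup_L1 lookup_minus)
lemma L2_diff: "L2 (p - q) = L2 p - L2 q"
  by (rule poly_mapping_eqI) (auto simp: lookup_L2 lookup_minus)

lemma L1_mult: "L1 (p * q) = L1 p * L1 q"
proof (induction p rule: pm_induct)
  case (single k a)
  show ?case
  proof (induction q rule: pm_induct)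
    case (single k' b) show ?case by (simp add: L1_single mult_single)
  qed (simp_all add: distrib_left L1_add)
qed (simp_all add: distrib_right L1_add)

lemma L2_mult: "L2 (p * q) = L2 p * L2 q"
proof (induction p rule: pm_induct)
  case (single k a)
  show ?case
  proof (induction q rule: pm_induct)
    case (single k' b) show ?case by (simp add: L2_single mult_single)
  qed (simp_all add: distrib_left L2_add)
qed (simp_all add: distrib_right L2_add)

lemma L1_sc: "L1 (sc z) = sc z" by (simp add: sc_def L1_single zero_prod_def)
lemma L2_sc: "L2 (sc z) = sc z" by (simp add: sc_def L2_single zero_prod_def)
lemma L1_1[simp]: "L1 1 = 1" using L1_sc[of 1] by simp
lemma L2_1[simp]: "L2 1 = 1" using L2_sc[of 1] by simp
lemma L1_power: "L1 (p ^ n) = L1 p ^ n" by (induction n) (simp_all add: L1_mult)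
lemma L2_power: "L2 (p ^ n) = L2 p ^ n" by (induction n) (simp_all add: L2_mult)
lemma L1_sum: "L1 (sum f S) = (\<Sum>x\<in>S. L1 (f x))"
  by (induction S rule: infinite_finite_induct) (simp_all add: L1_add)

lemma L12_comm: "L1 p * L2 q = L2 q * L1 p"
proof (induction p rule: pm_induct)
  case (single k a)
  show ?case
  proof (induction q rule: pm_induct)
    case (single k' b) show ?case by (simp add: L1_single L2_single mult_single mult.commute)
  qed (simp_all add: distrib_left distrib_right L2_add)
qed (simp_all add: distrib_left distrib_right L1_add)

definition Lam :: "nat \<Rightarrow> F2 \<Rightarrow> F" where
  "Lam n Z = (\<Sum>k\<in>Poly_Mapping.keys Z. sc (Poly_Mapping.lookup Z k) *
      (Poly_Mapping.single (fst k) 1 * Om n (Poly_Mapping.single (snd k) 1)))"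

lemma Lam_superset:
  assumes "finite S" "Poly_Mapping.keys Z \<subseteq> S"
  shows "Lam n Z = (\<Sum>k\<in>S. sc (Poly_Mapping.lookup Z k) *
      (Poly_Mapping.single (fst k) 1 * Om n (Poly_Mapping.single (snd k) 1)))"
  unfolding Lam_def
  by (rule sum.mono_neutral_left[OF assms]) (auto simp: in_keys_iff)

lemma Lam_add: "Lam n (Z + Z') = Lam n Z + Lam n Z'"
proof -
  let ?S = "Poly_Mapping.keys Z \<union> Poly_Mapping.keys Z'"
  have f: "finite ?S" by simp
  have "Lam n (Z + Z') = (\<Sum>k\<in>?S. sc (Poly_Mapping.lookup (Z + Z') k) *
      (Poly_Mapping.single (fst k) 1 * Om n (Poly_Mapping.single (snd k) 1)))"
    by (rule Lam_superset[OF f]) (simp add: keys_add)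
  also have "\<dots> = (\<Sum>k\<in>?S. sc (Poly_Mapping.lookup Z k) *
      (Poly_Mapping.single (fst k) 1 * Om n (Poly_Mapping.single (snd k) 1)))
    + (\<Sum>k\<in>?S. sc (Poly_Mapping.lookup Z' k) *
      (Poly_Mapping.single (fst k) 1 * Om n (Poly_Mapping.single (snd k) 1)))"
    by (simp add: lookup_add sc_add[symmetric] distrib_right sum.distrib)
  also have "\<dots> = Lam n Z + Lam n Z'"
    by (simp add: Lam_superset[OF f])
  finally show ?thesis .
qed

lemma Lam_0[simp]: "Lam n 0 = 0" by (simp add: Lam_def)

lemma Lam_single: "Lam n (Poly_Mapping.single (u, v) a) =
    sc a * (Poly_Mapping.single u 1 * Om n (Poly_Mapping.single v 1))"
  by (cases "a = 0") (simp_all add: Lam_def)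

lemma Lam_uminus: "Lam n (- Z) = - Lam n Z"
  using Lam_add[of n Z "- Z"] by (simp add: add_eq_0_iff2)
lemma Lam_diff: "Lam n (Z - Z') = Lam n Z - Lam n Z'"
  using Lam_add[of n Z "- Z'"] by (simp add: Lam_uminus)
lemma Lam_sum: "Lam n (sum f S) = (\<Sum>x\<in>S. Lam n (f x))"
  by (induction S rule: infinite_finite_induct) (simp_all add: Lam_add)

lemma sc_single: "sc z * Poly_Mapping.single k a = Poly_Mapping.single k (z * a)"
  by (simp add: sc_def mult_single)

lemma Lam_sc: "Lam n (sc z * Z) = sc z * Lam n Z"
proof (induction Z rule: pm_induct)
  case (single k a)
  obtain u v where k: "k = (u, v)" by (cases k)
  show ?case unfolding k sc_single Lam_single sc_mult[symmetric] by (simp only: mult.assoc)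
qed (simp_all add: distrib_left Lam_add)

lemma Lam_L1_single: "Lam n (L1 (Poly_Mapping.single k' b) * Poly_Mapping.single (u, v) a)
   = Poly_Mapping.single k' b * Lam n (Poly_Mapping.single (u, v) a)"
proof -
  have "Lam n (L1 (Poly_Mapping.single k' b) * Poly_Mapping.single (u, v) a)
      = sc (b * a) * (Poly_Mapping.single (k' + u) 1 * Om n (Poly_Mapping.single v 1))"
    unfolding L1_single mult_single by (simp add: Lam_single)
  also have "\<dots> = sc b * (sc a * (Poly_Mapping.single k' 1 * (Poly_Mapping.single u 1 * Om n (Poly_Mapping.single v 1))))"
    by (simp add: mult.assoc[symmetric] sc_mult mult_single)
  also have "\<dots> = sc b * (Poly_Mapping.single k' 1 * (sc a * (Poly_Mapping.single u 1 * Om n (Poly_Mapping.single v 1))))"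
    by (simp only: sc_left_comm[of "Poly_Mapping.single k' 1" a])
  also have "\<dots> = Poly_Mapping.single k' b * Lam n (Poly_Mapping.single (u, v) a)"
    unfolding Lam_single by (simp only: mult.assoc[symmetric] single_sc[of k' b, symmetric])
  finally show ?thesis .
qed

lemma Lam_L1: "Lam n (L1 p * Z) = p * Lam n Z"
proof (induction Z rule: pm_induct)
  case (single k a)
  obtain u v where k: "k = (u, v)" by (cases k)
  show ?case unfolding k
  proof (induction p rule: pm_induct)
    case (single k' b)
    show ?case by (rule Lam_L1_single)
  next
    case (add f g)
    then show ?case by (simp only: L1_add distrib_right Lam_add)
  qed simp
next
  case (add f g)
  then show ?case by (simp only: distrib_left Lam_add)
qed simp

lemma single_split: "Poly_Mapping.single (u, v) a = L1 (Poly_Mapping.single u a) * L2 (Poly_Mapping.single v 1)"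
  by (simp add: L1_single L2_single mult_single)

lemma L12_mult: "L1 a * L2 b * (L1 c * L2 d) = L1 (a * c) * L2 (b * d)"
proof -
  have "L1 a * L2 b * (L1 c * L2 d) = L1 a * (L2 b * L1 c) * L2 d" by (simp only: mult.assoc)
  also have "\<dots> = L1 a * (L1 c * L2 b) * L2 d" by (simp only: L12_comm)
  also have "\<dots> = L1 (a * c) * L2 (b * d)" by (simp only: mult.assoc L1_mult L2_mult)
  finally show ?thesis .
qed

lemma Lam_L2: "Lam n (L2 q) = Om n q"
proof (induction q rule: pm_induct)
  case (single k a)
  have "Lam n (L2 (Poly_Mapping.single k a)) = sc a * Om n (Poly_Mapping.single k 1)"
    by (simp add: L2_single Lam_single zero_wd_def[symmetric] flip: one_poly_mapping.abs_eq)
  also have "\<dots> = Om n (Poly_Mapping.single k a)" by (simp only: single_sc[of k a] Om_sc)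
  finally show ?case .
qed (simp_all add: L2_add Lam_add Om_add)

lemma Lam_L12: "Lam n (L1 p * L2 q) = p * Om n q"
  by (simp add: Lam_L1 Lam_L2)

lemma Lam_Om1: "Lam n (L2 (XX 1) * Z * L2 (XX 1) + L2 (XX 2) * Z * L2 (XX 2) + L2 (XX 3) * Z * L2 (XX 3)) = Lam (Suc n) Z"
proof (induction Z rule: pm_induct)
  case (single k a)
  obtain u v where k: "k = (u, v)" by (cases k)
  have e: "L2 (XX b) * Poly_Mapping.single (u, v) a * L2 (XX b) = L1 (Poly_Mapping.single u a) * L2 (XX b * Poly_Mapping.single v 1 * XX b)" for b
  proof -
    have "L2 (XX b) * Poly_Mapping.single (u, v) a * L2 (XX b) = (L1 1 * L2 (XX b)) * (L1 (Poly_Mapping.single u a) * L2 (Poly_Mapping.single v 1)) * (L1 1 * L2 (XX b))"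
      by (simp only: single_split L1_1 mult_1)
    also have "\<dots> = L1 (Poly_Mapping.single u a) * L2 (XX b * Poly_Mapping.single v 1 * XX b)"
      by (simp only: L12_mult mult_1 mult_1_right)
    finally show ?thesis .
  qed
  have "Lam n (L2 (XX 1) * Poly_Mapping.single k a * L2 (XX 1) + L2 (XX 2) * Poly_Mapping.single k a * L2 (XX 2) + L2 (XX 3) * Poly_Mapping.single k a * L2 (XX 3))
     = Lam n (L1 (Poly_Mapping.single u a) * L2 (Om1 (Poly_Mapping.single v 1)))"
    unfolding k e Om1_def L2_add distrib_left ..
  also have "\<dots> = Poly_Mapping.single u a * Om n (Om1 (Poly_Mapping.single v 1))" by (rule Lam_L12)
  also have "\<dots> = Lam (Suc n) (Poly_Mapping.single k a)"
    unfolding k single_split Lam_L12 Om_Suc ..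
  finally show ?case .
next
  case (add f g)
  have "L2 (XX 1) * (f + g) * L2 (XX 1) + L2 (XX 2) * (f + g) * L2 (XX 2) + L2 (XX 3) * (f + g) * L2 (XX 3)
    = (L2 (XX 1) * f * L2 (XX 1) + L2 (XX 2) * f * L2 (XX 2) + L2 (XX 3) * f * L2 (XX 3))
    + (L2 (XX 1) * g * L2 (XX 1) + L2 (XX 2) * g * L2 (XX 2) + L2 (XX 3) * g * L2 (XX 3))"
    by (simp add: distrib_left distrib_right add_ac)
  then show ?case using add by (simp add: Lam_add)
qed simp

definition J :: "F2 set" where "J = {Z. \<forall>P Q n. Lam n (P * Z * Q) \<in> IFg}"

lemma J_add: "Z \<in> J \<Longrightarrow> Z' \<in> J \<Longrightarrow> Z + Z' \<in> J"
  unfolding J_def by (simp add: distrib_left distrib_right Lam_add IFg_add)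
lemma J_uminus: "Z \<in> J \<Longrightarrow> - Z \<in> J"
  unfolding J_def by (simp add: Lam_uminus IFg_uminus)
lemma J_diff: "Z \<in> J \<Longrightarrow> Z' \<in> J \<Longrightarrow> Z - Z' \<in> J"
  unfolding J_def by (simp add: left_diff_distrib right_diff_distrib Lam_diff IFg_diff)
lemma J_0[simp]: "0 \<in> J" unfolding J_def by simp
lemma J_mult: assumes "Z \<in> J" shows "X * Z * Y \<in> J"
  unfolding J_def
proof (intro allI CollectI)
  fix P Q n
  have "P * (X * Z * Y) * Q = (P * X) * Z * (Y * Q)" by (simp add: mult.assoc)
  then show "Lam n (P * (X * Z * Y) * Q) \<in> IFg" using assms unfolding J_def by simp
qed
lemma J_Lam: assumes "Z \<in> J" shows "Lam n Z \<in> IFg"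
  using assms unfolding J_def by (metis (no_types, lifting) CollectD mult_1 mult_1_right)

lemma J_intro:
  assumes "\<And>u1 v1 a u2 v2 b n. Lam n (Poly_Mapping.single (u1, v1) a * Z * Poly_Mapping.single (u2, v2) b) \<in> IFg"
  shows "Z \<in> J"
  unfolding J_def
proof (intro CollectI allI)
  fix P Q n
  show "Lam n (P * Z * Q) \<in> IFg"
  proof (induction P rule: pm_induct)
    case (single k a)
    obtain u1 v1 where k: "k = (u1, v1)" by (cases k)
    show ?case
    proof (induction Q rule: pm_induct)
      case (single k' b)
      obtain u2 v2 where k': "k' = (u2, v2)" by (cases k')
      show ?case unfolding k k' by (rule assms)
    qed (simp_all add: distrib_left Lam_add IFg_add)
  qed (simp_all add: distrib_right Lam_add IFg_add)
qed

lemma split3: "Poly_Mapping.single (u1, v1) a * (L1 p * L2 q) * Poly_Mapping.single (u2, v2) b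
   = L1 (Poly_Mapping.single u1 a * p * Poly_Mapping.single u2 b) * L2 (Poly_Mapping.single v1 1 * q * Poly_Mapping.single v2 1)"
proof -
  have "Poly_Mapping.single (u1, v1) a * (L1 p * L2 q) * Poly_Mapping.single (u2, v2) b = (L1 (Poly_Mapping.single u1 a) * L2 (Poly_Mapping.single v1 1)) * (L1 p * L2 q) * (L1 (Poly_Mapping.single u2 b) * L2 (Poly_Mapping.single v2 1))"
    by (simp only: single_split)
  then show ?thesis by (simp only: L12_mult)
qed

lemma L1_as: "L1 p = L1 p * L2 1" by simp
lemma L2_as: "L2 p = L1 1 * L2 p" by simp

lemma J_L1: assumes "r \<in> IFg" shows "L1 r \<in> J"
proof (rule J_intro)
  fix u1 v1 a u2 v2 b n
  show "Lam n (Poly_Mapping.single (u1, v1) a * L1 r * Poly_Mapping.single (u2, v2) b) \<in> IFg"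
    using assms by (subst L1_as) (simp only: split3 Lam_L12 IFg_mult IFg_multR)
qed

lemma J_L2: assumes "r \<in> IFg" shows "L2 r \<in> J"
proof (rule J_intro)
  fix u1 v1 a u2 v2 b n
  show "Lam n (Poly_Mapping.single (u1, v1) a * L2 r * Poly_Mapping.single (u2, v2) b) \<in> IFg"
    using assms by (subst L2_as) (simp only: split3 Lam_L12 IFg_mult IFg_multL Om_IFg)
qed

lemma CC_swap: "(s1 * CC * s2) * Om n (t1 * t2) - (s1 * s2) * Om n (t1 * CC * t2) \<in> IFg"
proof -
  have "(s1 * CC * s2) * Om n (t1 * t2) - (s1 * s2) * Om n (t1 * CC * t2)
     = s1 * (CC * s2 - s2 * CC) * Om n (t1 * t2)
     + (s1 * s2) * (- (Om n (CC * (t1 * t2)) - CC * Om n (t1 * t2)))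
     + (s1 * s2) * Om n ((CC * t1 - t1 * CC) * t2)"
    by (simp add: algebra_simps Om_diff)
  moreover have "s1 * (CC * s2 - s2 * CC) * Om n (t1 * t2) \<in> IFg"
    using CC_central by (rule IFg_mult)
  moreover have "(s1 * s2) * (- (Om n (CC * (t1 * t2)) - CC * Om n (t1 * t2))) \<in> IFg"
    using Om_CC by (intro IFg_multL IFg_uminus)
  moreover have "(s1 * s2) * Om n ((CC * t1 - t1 * CC) * t2) \<in> IFg"
    using CC_central by (intro IFg_multL Om_IFg IFg_multR)
  ultimately show ?thesis by (simp add: IFg_add)
qed

lemma J_CC: "L1 CC - L2 CC \<in> J"
proof (rule J_intro)
  fix u1 v1 a u2 v2 b n
  have "Lam n (Poly_Mapping.single (u1, v1) a * (L1 CC - L2 CC) * Poly_Mapping.single (u2, v2) b)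
     = Lam n (Poly_Mapping.single (u1, v1) a * (L1 CC * L2 1) * Poly_Mapping.single (u2, v2) b)
     - Lam n (Poly_Mapping.single (u1, v1) a * (L1 1 * L2 CC) * Poly_Mapping.single (u2, v2) b)"
    by (simp add: left_diff_distrib right_diff_distrib Lam_diff)
  also have "\<dots> = (Poly_Mapping.single u1 a * CC * Poly_Mapping.single u2 b) * Om n (Poly_Mapping.single v1 1 * Poly_Mapping.single v2 1)
     - (Poly_Mapping.single u1 a * Poly_Mapping.single u2 b) * Om n (Poly_Mapping.single v1 1 * CC * Poly_Mapping.single v2 1)"
    by (simp only: split3 Lam_L12 mult_1_right)
  finally show "Lam n (Poly_Mapping.single (u1, v1) a * (L1 CC - L2 CC) * Poly_Mapping.single (u2, v2) b) \<in> IFg"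
    using CC_swap by simp
qed

lemma sl2_ideal_counit: "x \<in> sl2_ideal \<Longrightarrow> x [] = 0"
proof (induction rule: sl2_ideal.induct)
  case (gen a b p q r)
  then show ?case
    by (simp add: fa_mult_def sl2_rel_def fa_sub_def fa_scal_def fa_gen_def fa_mono_def)
qed (simp_all add: fa_add_def)

lemma one_notin_J: "- 1 \<notin> J"
proof
  assume "- 1 \<in> J"
  then have "Lam 0 (- 1) \<in> IFg" by (rule J_Lam)
  moreover have "Lam 0 (- 1) = - 1"
    using Lam_L12[of 0 "-1" 1] by (simp add: Om_def L1_uminus)
  ultimately have "tofa (- 1) \<in> sl2_ideal" by (simp add: IFg_def IF_def pr_uminus)
  then have "tofa (- 1) [] = 0" by (rule sl2_ideal_counit)
  moreover have "tofa (- 1 :: F) [] = - 1"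
    by (simp add: tofa_def zero_wd_def[symmetric] flip: one_poly_mapping.abs_eq)
  ultimately show False by simp
qed

definition JR :: "F2 \<Rightarrow> F2 \<Rightarrow> bool" where "JR Z Z' \<longleftrightarrow> Z - Z' \<in> J"

lemma equivp_JR: "equivp JR"
proof (rule equivpI)
  show "reflp JR" by (simp add: reflp_def JR_def)
  show "symp JR" unfolding symp_def JR_def using J_uminus by fastforce
  show "transp JR" unfolding transp_def JR_def using J_add by fastforce
qed

quotient_type A = F2 / JR
  by (rule equivp_JR)

instantiation A :: ring_1
begin
lift_definition zero_A :: A is 0 .
lift_definition one_A :: A is 1 .
lift_definition plus_A :: "A \<Rightarrow> A \<Rightarrow> A" is "(+)"
  unfolding JR_def proof -
  fix x x' y y' :: F2 assume "x - x' \<in> J" "y - y' \<in> J"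
  then have "(x - x') + (y - y') \<in> J" by (rule J_add)
  then show "x + y - (x' + y') \<in> J" by (simp add: algebra_simps)
qed
lift_definition uminus_A :: "A \<Rightarrow> A" is uminus
  unfolding JR_def proof -
  fix x x' :: F2 assume "x - x' \<in> J"
  then have "- (x - x') \<in> J" by (rule J_uminus)
  then show "- x - - x' \<in> J" by (simp add: algebra_simps)
qed
lift_definition minus_A :: "A \<Rightarrow> A \<Rightarrow> A" is "(-)"
  unfolding JR_def proof -
  fix x x' y y' :: F2 assume "x - x' \<in> J" "y - y' \<in> J"
  then have "(x - x') - (y - y') \<in> J" by (rule J_diff)
  then show "x - y - (x' - y') \<in> J" by (simp add: algebra_simps)
qed
lift_definition times_A :: "A \<Rightarrow> A \<Rightarrow> A" is "(*)"
proof -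
  fix x x' y y' :: F2
  assume "JR x x'" "JR y y'"
  then have "(x - x') * y \<in> J" "x' * (y - y') \<in> J" unfolding JR_def
    using J_mult[of _ 1] J_mult[of _ _ 1] by simp_all
  then have "(x - x') * y + x' * (y - y') \<in> J" by (rule J_add)
  then show "JR (x * y) (x' * y')" unfolding JR_def by (simp add: algebra_simps)
qed
instance
proof
  fix a b c :: A
  show "a + b + c = a + (b + c)" by transfer (simp add: JR_def)
  show "a + b = b + a" by transfer (simp add: JR_def)
  show "0 + a = a" by transfer (simp add: JR_def)
  show "- a + a = 0" by transfer (simp add: JR_def)
  show "a - b = a + - b" by transfer (simp add: JR_def)
  show "a * b * c = a * (b * c)" by transfer (simp add: JR_def mult.assoc)
  show "1 * a = a" by transfer (simp add: JR_def)
  show "a * 1 = a" by transfer (simp add: JR_def)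
  show "(a + b) * c = a * c + b * c" by transfer (simp add: JR_def distrib_right)
  show "a * (b + c) = a * b + a * c" by transfer (simp add: JR_def distrib_left)
  show "(0::A) \<noteq> 1" by transfer (simp add: JR_def one_notin_J)
qed
end

lemma absA_add: "abs_A (x + y) = abs_A x + abs_A y" by (simp add: plus_A.abs_eq)
lemma absA_mult: "abs_A (x * y) = abs_A x * abs_A y" by (simp add: times_A.abs_eq)
lemma absA_diff: "abs_A (x - y) = abs_A x - abs_A y" by (simp add: minus_A.abs_eq)
lemma absA_uminus: "abs_A (- x) = - abs_A x" by (simp add: uminus_A.abs_eq)
lemma absA_0: "abs_A 0 = 0" by (simp add: zero_A_def)
lemma absA_1: "abs_A 1 = 1" by (simp add: one_A_def)
lemma absA_power: "abs_A (x ^ n) = abs_A x ^ n" by (induction n) (simp_all add: absA_1 absA_mult)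
lemma absA_sum: "abs_A (sum f S) = (\<Sum>x\<in>S. abs_A (f x))"
  by (induction S rule: infinite_finite_induct) (simp_all add: absA_0 absA_add)
lemma absA_J: assumes "x \<in> J" shows "abs_A x = 0"
proof -
  have "abs_A x = abs_A 0" using assms by (simp add: A.abs_eq_iff JR_def)
  then show ?thesis by (simp add: absA_0)
qed
lemma absA_eqI: "x - y \<in> J \<Longrightarrow> abs_A x = abs_A y"
  by (simp add: A.abs_eq_iff JR_def)
lemma absA_eqD: "abs_A x = abs_A y \<Longrightarrow> x - y \<in> J"
  by (simp add: A.abs_eq_iff JR_def)

definition sA :: "nat \<Rightarrow> F" where "sA a = Poly_Mapping.single (Wd [a]) (- \<i>)"
definition W :: "nat \<Rightarrow> A" where "W a = abs_A (L1 (sA a))"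
definition Y :: "nat \<Rightarrow> A" where "Y a = abs_A (L2 (sA a))"
definition scA :: "complex \<Rightarrow> A" where "scA z = abs_A (sc z)"

lemma scA_comm: "scA z * x = x * scA z"
  unfolding scA_def by transfer (simp add: JR_def sc_comm)

lemma WY_comm: "Y b * W a = W a * Y b"
  unfolding W_def Y_def by (simp flip: absA_mult add: L12_comm)

lemma Rel_explicit: "Rel p q r = Poly_Mapping.single (Wd [p, q]) 1 - Poly_Mapping.single (Wd [q, p]) 1 - Poly_Mapping.single (Wd [r]) \<i>"
  by (simp add: Rel_def XX_def mult_single sc_single)

lemma sA_rel: "sA p * sA q - sA q * sA p - sA r = - Rel p q r"
  by (simp add: sA_def Rel_explicit mult_single single_uminus)

lemma W_rel: "(p, q, r) \<in> sl2_triples \<Longrightarrow> W p * W q - W q * W p - W r = 0"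
  unfolding W_def
  by (simp flip: absA_mult absA_diff L1_mult L1_diff add: sA_rel L1_uminus absA_J J_uminus J_L1 Rel_IFg)

lemma Y_rel: "(p, q, r) \<in> sl2_triples \<Longrightarrow> Y p * Y q - Y q * Y p - Y r = 0"
  unfolding Y_def
  by (simp flip: absA_mult absA_diff L2_mult L2_diff add: sA_rel L2_uminus absA_J J_uminus J_L2 Rel_IFg)

lemma W21: "W 2 * W 1 = W 1 * W 2 - W 3" using W_rel[OF tr(1)] by (simp add: algebra_simps)
lemma W31: "W 3 * W 1 = W 1 * W 3 + W 2" using W_rel[OF tr(3)] by (simp add: algebra_simps)
lemma W32: "W 3 * W 2 = W 2 * W 3 - W 1" using W_rel[OF tr(2)] by (simp add: algebra_simps)
lemma Y21: "Y 2 * Y 1 = Y 1 * Y 2 - Y 3" using Y_rel[OF tr(1)] by (simp add: algebra_simps)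
lemma Y31: "Y 3 * Y 1 = Y 1 * Y 3 + Y 2" using Y_rel[OF tr(3)] by (simp add: algebra_simps)
lemma Y32: "Y 3 * Y 2 = Y 2 * Y 3 - Y 1" using Y_rel[OF tr(2)] by (simp add: algebra_simps)

lemma sA_sq: "sA 1 * sA 1 + sA 2 * sA 2 + sA 3 * sA 3 = - CC"
  by (simp add: sA_def CC_def XX_def mult_single single_uminus)

definition Cw :: A where "Cw = W 1 * W 1 + W 2 * W 2 + W 3 * W 3"
definition Cy :: A where "Cy = Y 1 * Y 1 + Y 2 * Y 2 + Y 3 * Y 3"

lemma Cw_abs: "Cw = abs_A (L1 (- CC))"
  unfolding Cw_def W_def by (simp flip: absA_mult absA_add L1_mult L1_add sA_sq)
lemma Cy_abs: "Cy = abs_A (L2 (- CC))"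
  unfolding Cy_def Y_def by (simp flip: absA_mult absA_add L2_mult L2_add sA_sq)

lemma Cw_Cy: "Cw = Cy"
  unfolding Cw_abs Cy_abs
  by (rule absA_eqI) (simp add: L1_uminus L2_uminus J_uminus[OF J_CC, simplified])

definition "W1 = W 1"
definition "W2 = W 2"
definition "W3 = W 3"
definition "Y1 = Y 1"
definition "Y2 = Y 2"
definition "Y3 = Y 3"

lemma W21c: "W2 * W1 = W1 * W2 - W3" unfolding W1_def W2_def W3_def by (rule W21)
lemma W31c: "W3 * W1 = W1 * W3 + W2" unfolding W1_def W2_def W3_def by (rule W31)
lemma W32c: "W3 * W2 = W2 * W3 - W1" unfolding W1_def W2_def W3_def by (rule W32)
lemma Y21c: "Y2 * Y1 = Y1 * Y2 - Y3" unfolding Y1_def Y2_def Y3_def by (rule Y21)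
lemma Y31c: "Y3 * Y1 = Y1 * Y3 + Y2" unfolding Y1_def Y2_def Y3_def by (rule Y31)
lemma Y32c: "Y3 * Y2 = Y2 * Y3 - Y1" unfolding Y1_def Y2_def Y3_def by (rule Y32)

lemma W21': "W2 * (W1 * z) = W1 * (W2 * z) - W3 * z" by (metis (no_types) mult.assoc W21c left_diff_distrib)
lemma W31': "W3 * (W1 * z) = W1 * (W3 * z) + W2 * z" by (metis (no_types) mult.assoc W31c distrib_right)
lemma W32': "W3 * (W2 * z) = W2 * (W3 * z) - W1 * z" by (metis (no_types) mult.assoc W32c left_diff_distrib)
lemma Y21': "Y2 * (Y1 * z) = Y1 * (Y2 * z) - Y3 * z" by (metis (no_types) mult.assoc Y21c left_diff_distrib)
lemma Y31': "Y3 * (Y1 * z) = Y1 * (Y3 * z) + Y2 * z" by (metis (no_types) mult.assoc Y31c distrib_right)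
lemma Y32': "Y3 * (Y2 * z) = Y2 * (Y3 * z) - Y1 * z" by (metis (no_types) mult.assoc Y32c left_diff_distrib)

lemma WYc: "Y1 * W1 = W1 * Y1" "Y1 * W2 = W2 * Y1" "Y1 * W3 = W3 * Y1"
  "Y2 * W1 = W1 * Y2" "Y2 * W2 = W2 * Y2" "Y2 * W3 = W3 * Y2"
  "Y3 * W1 = W1 * Y3" "Y3 * W2 = W2 * Y3" "Y3 * W3 = W3 * Y3"
  unfolding W1_def W2_def W3_def Y1_def Y2_def Y3_def by (simp_all add: WY_comm)
lemma WYc': "Y1 * (W1 * z) = W1 * (Y1 * z)" "Y1 * (W2 * z) = W2 * (Y1 * z)" "Y1 * (W3 * z) = W3 * (Y1 * z)"
  "Y2 * (W1 * z) = W1 * (Y2 * z)" "Y2 * (W2 * z) = W2 * (Y2 * z)" "Y2 * (W3 * z) = W3 * (Y2 * z)"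
  "Y3 * (W1 * z) = W1 * (Y3 * z)" "Y3 * (W2 * z) = W2 * (Y3 * z)" "Y3 * (W3 * z) = W3 * (Y3 * z)"
  by (simp_all add: mult.assoc[symmetric] WYc)

lemmas NO = W21c W31c W32c Y21c Y31c Y32c W21' W31' W32' Y21' Y31' Y32' WYc WYc'

definition T :: A where "T = W1 * Y1 + W2 * Y2 + W3 * Y3"
definition "Z1 = W2 * Y3 - W3 * Y2"
definition "Z2 = W3 * Y1 - W1 * Y3"
definition "Z3 = W1 * Y2 - W2 * Y1"

lemma R1_1: "Y1 * T = T * Y1 + Z1" by (simp add: T_def Z1_def algebra_simps NO)
lemma R1_2: "Y2 * T = T * Y2 + Z2" by (simp add: T_def Z2_def algebra_simps NO)
lemma R1_3: "Y3 * T = T * Y3 + Z3" by (simp add: T_def Z3_def algebra_simps NO)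
lemma R2_1: "W1 * T = T * W1 - Z1" by (simp add: T_def Z1_def algebra_simps NO)
lemma R2_2: "W2 * T = T * W2 - Z2" by (simp add: T_def Z2_def algebra_simps NO)
lemma R2_3: "W3 * T = T * W3 - Z3" by (simp add: T_def Z3_def algebra_simps NO)

lemma Cw': "Cw = W1 * W1 + W2 * W2 + W3 * W3" unfolding Cw_def W1_def W2_def W3_def ..
lemma Cy': "Cy = Y1 * Y1 + Y2 * Y2 + Y3 * Y3" unfolding Cy_def Y1_def Y2_def Y3_def ..

lemma R3_1: "Z1 * T = (T + Cy) * W1 - (T + Cw) * Y1 + (T - 1) * Z1"
  by (simp add: T_def Z1_def Cw' Cy' algebra_simps NO)
lemma R3_2: "Z2 * T = (T + Cy) * W2 - (T + Cw) * Y2 + (T - 1) * Z2"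
  by (simp add: T_def Z2_def Cw' Cy' algebra_simps NO)
lemma R3_3: "Z3 * T = (T + Cy) * W3 - (T + Cw) * Y3 + (T - 1) * Z3"
  by (simp add: T_def Z3_def Cw' Cy' algebra_simps NO)

lemma Cw_W: "Cw * W1 = W1 * Cw" "Cw * W2 = W2 * Cw" "Cw * W3 = W3 * Cw"
  by (simp_all add: Cw' algebra_simps NO)
lemma Cw_Y: "Cw * Y1 = Y1 * Cw" "Cw * Y2 = Y2 * Cw" "Cw * Y3 = Y3 * Cw"
  by (simp_all add: Cw' algebra_simps NO)
lemma Cy_Y: "Cy * Y1 = Y1 * Cy" "Cy * Y2 = Y2 * Cy" "Cy * Y3 = Y3 * Cy"
  by (simp_all add: Cy' algebra_simps NO)

lemma dot1: "W1 * Y1 + W2 * Y2 + W3 * Y3 = T" by (simp add: T_def)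
lemma dot2: "Y1 * Y1 + Y2 * Y2 + Y3 * Y3 = Cy" by (simp add: Cy')
lemma dot3: "Z1 * Y1 + Z2 * Y2 + Z3 * Y3 = T"
  by (simp add: T_def Z1_def Z2_def Z3_def algebra_simps NO)

fun abA :: "'a::ring_1 \<Rightarrow> 'a \<Rightarrow> nat \<Rightarrow> 'a \<times> 'a" where
  "abA t k 0 = (0, 0)"
| "abA t k (Suc m) = (fst (abA t k m) * t + snd (abA t k m) * (t + k),
     t ^ m - fst (abA t k m) - fst (abA t k m) + snd (abA t k m) * (t - 1))"

lemma abstract_rec:
  fixes y d z t k :: "'a::ring_1"
  assumes "y * t = t * y + z" "d * t = t * d - z - z" "z * t = (t + k) * d + (t - 1) * z"
  shows "y * t ^ m = t ^ m * y + fst (abA t k m) * d + snd (abA t k m) * z"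
proof (induction m)
  case (Suc m)
  let ?a = "fst (abA t k m)" and ?b = "snd (abA t k m)"
  have "y * t ^ Suc m = (y * t ^ m) * t" by (simp only: power_Suc2 mult.assoc)
  also have "\<dots> = t ^ m * (y * t) + ?a * (d * t) + ?b * (z * t)"
    by (simp add: Suc distrib_right mult.assoc)
  also have "\<dots> = t ^ Suc m * y + (?a * t + ?b * (t + k)) * d + (t ^ m - ?a - ?a + ?b * (t - 1)) * z"
    unfolding assms by (simp add: algebra_simps power_Suc2 del: power_Suc)
  finally show ?case by simp
qed simp

definition K :: A where "K = Cw"

lemma D_rel: "(W1 - Y1) * T = T * (W1 - Y1) - Z1 - Z1" "(W2 - Y2) * T = T * (W2 - Y2) - Z2 - Z2"
  "(W3 - Y3) * T = T * (W3 - Y3) - Z3 - Z3"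
  by (simp_all add: left_diff_distrib right_diff_distrib R1_1 R1_2 R1_3 R2_1 R2_2 R2_3)

lemma Z_rel: "Z1 * T = (T + K) * (W1 - Y1) + (T - 1) * Z1" "Z2 * T = (T + K) * (W2 - Y2) + (T - 1) * Z2"
  "Z3 * T = (T + K) * (W3 - Y3) + (T - 1) * Z3"
  by (simp_all add: R3_1 R3_2 R3_3 K_def Cw_Cy right_diff_distrib)

definition alA :: "nat \<Rightarrow> A" where "alA m = fst (abA T K m)"
definition beA :: "nat \<Rightarrow> A" where "beA m = snd (abA T K m)"

lemma YT: "Y1 * T ^ m = T ^ m * Y1 + alA m * (W1 - Y1) + beA m * Z1"
  "Y2 * T ^ m = T ^ m * Y2 + alA m * (W2 - Y2) + beA m * Z2"
  "Y3 * T ^ m = T ^ m * Y3 + alA m * (W3 - Y3) + beA m * Z3"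
  unfolding alA_def beA_def
  by (rule abstract_rec; simp add: R1_1 R1_2 R1_3 D_rel Z_rel)+

lemma S_formula: "Y1 * T ^ m * Y1 + Y2 * T ^ m * Y2 + Y3 * T ^ m * Y3 = T ^ m * K + alA m * (T - K) + beA m * T"
proof -
  have "Y1 * T ^ m * Y1 + Y2 * T ^ m * Y2 + Y3 * T ^ m * Y3
     = T ^ m * (Y1 * Y1 + Y2 * Y2 + Y3 * Y3) + alA m * ((W1 * Y1 + W2 * Y2 + W3 * Y3) - (Y1 * Y1 + Y2 * Y2 + Y3 * Y3))
       + beA m * (Z1 * Y1 + Z2 * Y2 + Z3 * Y3)"
    unfolding YT by (simp add: algebra_simps)
  also have "\<dots> = T ^ m * K + alA m * (T - K) + beA m * T"
    unfolding dot1 dot2 dot3 K_def Cw_Cy ..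
  finally show ?thesis .
qed

lemma alA_Suc: "alA (Suc m) = alA m * T + beA m * (T + K)" by (simp add: alA_def beA_def)
lemma beA_Suc: "beA (Suc m) = T ^ m - alA m - alA m + beA m * (T - 1)" by (simp add: alA_def beA_def)
lemma alA_0: "alA 0 = 0" by (simp add: alA_def)
lemma beA_0: "beA 0 = 0" by (simp add: beA_def)

lemma K_W: "K * W1 = W1 * K" "K * W2 = W2 * K" "K * W3 = W3 * K"
  unfolding K_def by (simp_all add: Cw_W)
lemma K_Y: "K * Y1 = Y1 * K" "K * Y2 = Y2 * K" "K * Y3 = Y3 * K"
  unfolding K_def by (simp_all add: Cw_Y)
lemma comm_mult: "k * a = a * (k::'a::ring_1) \<Longrightarrow> k * b = b * k \<Longrightarrow> k * (a * b) = (a * b) * k"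
  by (metis mult.assoc)
lemma comm_add: "k * a = a * (k::'a::ring_1) \<Longrightarrow> k * b = b * k \<Longrightarrow> k * (a + b) = (a + b) * k"
  by (simp add: distrib_left distrib_right)
lemma comm_pow: "k * a = a * (k::'a::ring_1) \<Longrightarrow> k * a ^ i = a ^ i * k"
  by (induction i) (simp_all add: comm_mult)
lemma K_T: "K * T = T * K"
  unfolding T_def by (intro comm_add comm_mult K_W K_Y)
lemma K_Tpow: "K * T ^ i = T ^ i * K"
  by (rule comm_pow[OF K_T])

type_synonym R = "complex poly poly"

fun abP :: "nat \<Rightarrow> R \<times> R" where
  "abP 0 = (0, 0)"
| "abP (Suc m) = (fst (abP m) * py + snd (abP m) * (py - pc),
     py ^ m - fst (abP m) - fst (abP m) + snd (abP m) * (py - 1))"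

definition PP :: "nat \<Rightarrow> R" where
  "PP m = - pc * py ^ m + fst (abP m) * (py + pc) + snd (abP m) * py"

definition GG :: "R fps" where "GG = Abs_fps (\<lambda>m. - PP m)"

lemma uden_nest: "u_den * f = f - fps_const (2 * py - 1) * (fps_X * f) - fps_const (2 * pc - py^2 - py) * (fps_X * (fps_X * f))"
  unfolding u_den_def by (simp add: algebra_simps power2_eq_square)

lemma D_nest: "(1 - fps_const py * fps_X) * u_den * f = u_den * f - fps_const py * (fps_X * (u_den * f))"
  by (simp add: algebra_simps)

lemma PP_rec: "PP (Suc (Suc (Suc m))) = (3 * py - 1) * PP (Suc (Suc m)) - (3 * py^2 - 2 * pc) * PP (Suc m)
   - py * (2 * pc - py^2 - py) * PP m"
  unfolding PP_def by (simp add: Let_def) algebra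

lemma DG_nth: "fps_nth ((1 - fps_const py * fps_X) * u_den * GG) n
  = fps_nth (fps_const pc * u_den + fps_const (pc^2) * fps_X ^ 2 - fps_const py * fps_X) n"
proof -
  consider "n = 0" | "n = 1" | "n = 2" | m where "n = Suc (Suc (Suc m))"
    by (metis One_nat_def Suc_1 not0_implies_Suc)
  then show ?thesis
  proof cases
    case 1 then show ?thesis
      by (simp add: D_nest uden_nest GG_def u_den_def PP_def)
  next
    case 2 then show ?thesis
      by (simp add: D_nest uden_nest GG_def u_den_def PP_def fps_X_power_nth algebra_simps)
  next
    case 3 then show ?thesis
      by (simp add: D_nest uden_nest GG_def u_den_def PP_def fps_X_power_nth numeral_2_eq_2 algebra_simps)
  next
    case 4
    have "fps_nth ((1 - fps_const py * fps_X) * u_den * GG) n = - PP (Suc (Suc (Suc m))) + (3 * py - 1) * PP (Suc (Suc m)) - (3 * py^2 - 2 * pc) * PP (Suc m)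
   - py * (2 * pc - py^2 - py) * PP m"
      by (simp add: 4 D_nest uden_nest GG_def algebra_simps power2_eq_square)
    also have "\<dots> = 0" by (simp add: PP_rec)
    finally show ?thesis
      by (simp add: 4 u_den_def fps_X_power_nth numeral_2_eq_2)
  qed
qed

lemma DG: "(1 - fps_const py * fps_X) * u_den * GG = fps_const pc * u_den + fps_const (pc^2) * fps_X ^ 2 - fps_const py * fps_X"
  by (rule fps_ext) (rule DG_nth)

lemma D_nz: "(1 - fps_const py * fps_X) * u_den \<noteq> 0"
proof -
  have a: "fps_nth (1 - fps_const py * fps_X) 0 = 1" by simp
  have b: "fps_nth u_den 0 = 1" by (simp add: u_den_def)
  have "fps_nth ((1 - fps_const py * fps_X) * u_den) 0 = 1"
    by (simp only: fps_mult_nth_0 a b) simp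
  then show ?thesis by (metis fps_zero_nth zero_neq_one)
qed

lemma u_series_GG: "u_series = GG"
  unfolding u_series_def
proof (rule the1_equality)
  show "\<exists>!F. (1 - fps_const py * fps_X) * u_den * F = fps_const pc * u_den + fps_const (pc^2) * fps_X ^ 2 - fps_const py * fps_X"
  proof (rule ex1I[of _ GG])
    fix F assume "(1 - fps_const py * fps_X) * u_den * F = fps_const pc * u_den + fps_const (pc^2) * fps_X ^ 2 - fps_const py * fps_X"
    then have "(1 - fps_const py * fps_X) * u_den * F = (1 - fps_const py * fps_X) * u_den * GG" by (simp add: DG)
    then show "F = GG" using D_nz by simp
  qed (rule DG)
qed (rule DG)

lemma u_poly_PP: "u_poly i m = - coeff (PP m) i"
  by (simp add: u_poly_def u_series_GG GG_def)

lemma coeff_mult_py: "coeff (p * py) i = (if i = 0 then 0 else coeff p (i - 1))"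
  by (cases i) (simp_all add: py_def)
lemma coeff_mult_pc: "coeff (p * pc) i = [:0, 1:] * coeff p i"
  by (simp add: pc_def)
lemma coeff_mult_py': "coeff (py * p) i = (if i = 0 then 0 else coeff p (i - 1))"
  by (simp add: mult.commute[of py] coeff_mult_py)
lemma coeff_mult_pc': "coeff (pc * p) i = [:0, 1:] * coeff p i"
  by (simp add: pc_def)
lemma coeff_py_pow: "coeff (py ^ m) i = (if i = m then 1 else 0)"
proof (induction m arbitrary: i)
  case 0 then show ?case by (simp add: coeff_1)
next
  case (Suc m)
  show ?case using Suc by (auto simp: coeff_mult_py')
qed

lemma coeff_2: "coeff (2 * p) i = 2 * coeff p i"
  by (metis coeff_smult numeral_times_minus_swap mult_2 mult_2_right coeff_add)
lemmas CF = coeff_mult_py coeff_mult_pc coeff_mult_py' coeff_mult_pc' coeff_py_pow coeff_2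
  distrib_left distrib_right left_diff_distrib right_diff_distrib
definition "al m = fst (abP m)"
definition "be m = snd (abP m)"
lemma al_Suc: "al (Suc m) = al m * py + be m * (py - pc)" by (simp add: al_def be_def)
lemma be_Suc: "be (Suc m) = py ^ m - al m - al m + be m * (py - 1)" by (simp add: al_def be_def)
lemma al_0: "al 0 = 0" by (simp add: al_def)
lemma be_0: "be 0 = 0" by (simp add: be_def)
lemma PP_al: "PP m = - pc * py ^ m + al m * (py + pc) + be m * py" by (simp add: PP_def al_def be_def)

lemma coeff_al_Suc: "coeff (al (Suc m)) i = (if i = 0 then 0 else coeff (al m) (i - 1))
   + (if i = 0 then 0 else coeff (be m) (i - 1)) - [:0, 1:] * coeff (be m) i"
  by (simp add: al_Suc right_diff_distrib coeff_mult_py coeff_mult_pc)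
lemma coeff_be_Suc: "coeff (be (Suc m)) i = (if i = m then 1 else 0) - coeff (al m) i - coeff (al m) i
   + (if i = 0 then 0 else coeff (be m) (i - 1)) - coeff (be m) i"
  unfolding be_Suc right_diff_distrib coeff_add coeff_diff coeff_mult_py coeff_py_pow by simp
lemma coeff_PP: "coeff (PP m) i = - ([:0, 1:] * (if i = m then 1 else 0)) + (if i = 0 then 0 else coeff (al m) (i - 1))
   + [:0, 1:] * coeff (al m) i + (if i = 0 then 0 else coeff (be m) (i - 1))"
  by (simp add: PP_al distrib_left coeff_mult_py coeff_mult_pc coeff_mult_pc' coeff_py_pow)

lemma al_deg: "i \<ge> m \<Longrightarrow> coeff (al m) i = 0 \<and> coeff (be m) i = 0"
proof (induction m arbitrary: i)
  case 0 then show ?case by (simp add: al_0 be_0)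
next
  case (Suc m)
  then have "i - 1 \<ge> m" "i \<noteq> 0" "i \<ge> m" "i \<noteq> m" by auto
  with Suc.IH show ?case by (simp add: coeff_al_Suc coeff_be_Suc)
qed

lemma al_top: "coeff (al (Suc m)) m = [: of_nat (m * (m + 1)) / 2 :] \<and> coeff (be (Suc m)) m = [: of_nat (Suc m) :]"
proof (induction m)
  case 0 then show ?case by (simp add: coeff_al_Suc coeff_be_Suc al_0 be_0)
next
  case (Suc m)
  have z: "coeff (al (Suc m)) (Suc m) = 0" "coeff (be (Suc m)) (Suc m) = 0"
    using al_deg[of "Suc m" "Suc m"] by auto
  have e: "of_nat (m * (m + 1)) / 2 + of_nat (Suc m) = (of_nat (Suc m * (Suc m + 1)) / 2 :: complex)"
    by (simp add: field_simps)
  have "coeff (al (Suc (Suc m))) (Suc m) = [: of_nat (m * (m + 1)) / 2 :] + [: of_nat (Suc m) :]"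
    by (subst coeff_al_Suc) (simp add: Suc.IH z)
  moreover have "coeff (be (Suc (Suc m))) (Suc m) = 1 + [: of_nat (Suc m) :]"
    by (subst coeff_be_Suc) (simp add: Suc.IH z)
  moreover have "(1::complex poly) + [: of_nat (Suc m) :] = [: of_nat (Suc (Suc m)) :]"
  proof -
    have o: "(1::complex poly) = [:1:]" by simp
    show ?thesis by (subst o, simp only: add_pCons add_0, simp)
  qed
  ultimately show ?case by (simp add: e)
qed

lemma PP_deg: "i > m \<Longrightarrow> coeff (PP m) i = 0"
proof -
  assume "i > m"
  then have "i - 1 \<ge> m" "i \<noteq> 0" "i \<ge> m" "i \<noteq> m" by auto
  with al_deg show ?thesis by (simp add: coeff_PP)
qed

lemma PP_top: "coeff (PP m) m = [: of_nat (m * (m + 1)) / 2 :] - [:0, 1:]"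
proof (cases m)
  case 0 then show ?thesis by (simp add: coeff_PP al_0 be_0)
next
  case (Suc k)
  have z: "coeff (al (Suc k)) (Suc k) = 0" using al_deg[of "Suc k" "Suc k"] by auto
  have e: "of_nat (k * (k + 1)) / 2 + of_nat (Suc k) = (of_nat (Suc k * (Suc k + 1)) / 2 :: complex)"
    by (simp add: field_simps)
  have "coeff (PP m) m = [: of_nat (k * (k + 1)) / 2 :] + [: of_nat (Suc k) :] - [:0, 1:]"
    unfolding Suc by (simp only: coeff_PP) (simp add: al_top[of k] z)
  then show ?thesis unfolding Suc by (simp add: e)
qed

definition evc :: "complex poly \<Rightarrow> F" where
  "evc q = (\<Sum>j\<le>degree q. sc (coeff q j) * CC ^ j)"

lemma evc_N: "degree q \<le> N \<Longrightarrow> evc q = (\<Sum>j\<le>N. sc (coeff q j) * CC ^ j)"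
  unfolding evc_def by (rule sum.mono_neutral_left) (auto simp: coeff_eq_0)

definition ecA :: "complex poly \<Rightarrow> A" where "ecA q = abs_A (L1 (evc q))"

lemma absA_L1_CC: "abs_A (L1 CC) = - K"
  unfolding K_def Cw_abs by (simp add: L1_uminus absA_uminus)

lemma absA_sc: "abs_A (L1 (sc z)) = scA z" by (simp add: L1_sc scA_def)

lemma ecA_N: "degree q \<le> N \<Longrightarrow> ecA q = (\<Sum>j\<le>N. scA (coeff q j) * (- K) ^ j)"
  by (simp add: ecA_def evc_N L1_sum L1_mult L1_power absA_sum absA_mult absA_power absA_sc absA_L1_CC)

lemma ecA_def2: "ecA q = (\<Sum>j\<le>degree q. scA (coeff q j) * (- K) ^ j)"
  by (rule ecA_N) simp

lemma scA_add: "scA (a + b) = scA a + scA b" by (simp add: scA_def sc_add[symmetric] absA_add)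
lemma scA_0[simp]: "scA 0 = 0" by (simp add: scA_def absA_0)
lemma scA_1[simp]: "scA 1 = 1" by (simp add: scA_def absA_1)
lemma scA_mult: "scA (a * b) = scA a * scA b" by (simp add: scA_def sc_mult[symmetric] absA_mult)
lemma scA_uminus: "scA (- a) = - scA a" by (simp add: scA_def sc_minus absA_uminus)

lemma ecA_add: "ecA (p + q) = ecA p + ecA q"
proof -
  let ?N = "max (degree p) (degree q)"
  have "degree (p + q) \<le> ?N" by (rule degree_add_le) auto
  then show ?thesis
    by (simp add: ecA_N[of _ ?N] coeff_add scA_add distrib_right sum.distrib)
qed
lemma ecA_0[simp]: "ecA 0 = 0" by (simp add: ecA_def2)
lemma ecA_uminus: "ecA (- p) = - ecA p"
  using ecA_add[of p "- p"] by (simp add: add_eq_0_iff2)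
lemma ecA_diff: "ecA (p - q) = ecA p - ecA q"
  using ecA_add[of p "- q"] by (simp add: ecA_uminus)
lemma ecA_1[simp]: "ecA 1 = 1" by (simp add: ecA_def2)

lemma ecA_X: "ecA (pCons 0 q) = ecA q * (- K)"
proof -
  have "degree (pCons 0 q) \<le> Suc (degree q)"
    by (rule degree_pCons_le)
  then have "ecA (pCons 0 q) = (\<Sum>j\<le>Suc (degree q). scA (coeff (pCons 0 q) j) * (- K) ^ j)"
    by (rule ecA_N)
  also have "\<dots> = (\<Sum>j\<le>degree q. scA (coeff q j) * (- K) ^ Suc j)"
    by (subst sum.atMost_Suc_shift) (simp del: power_Suc)
  also have "\<dots> = ecA q * (- K)"
    by (simp add: ecA_def2 sum_distrib_right mult.assoc power_Suc2 sum_negf del: power_Suc)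
  finally show ?thesis .
qed

lemma K_comm_gen: assumes "K * x = x * K" shows "(- K) ^ j * x = x * (- K) ^ j"
proof -
  have "x * (- K) = (- K) * x" using assms by simp
  then show ?thesis using comm_pow[of x "- K" j] by simp
qed

lemma ecA_T: "ecA q * T = T * ecA q"
  unfolding ecA_def2 sum_distrib_left sum_distrib_right
proof (rule sum.cong[OF refl])
  fix j
  have "(- K) ^ j * T = T * (- K) ^ j" by (rule K_comm_gen[OF K_T])
  then show "scA (coeff q j) * (- K) ^ j * T = T * (scA (coeff q j) * (- K) ^ j)"
    by (metis mult.assoc scA_comm)
qed

lemma ecA_Tpow: "ecA q * T ^ i = T ^ i * ecA q"
  using comm_pow[of "ecA q" T i] ecA_T by simp

definition ev :: "R \<Rightarrow> A" where "ev p = (\<Sum>i\<le>degree p. ecA (coeff p i) * T ^ i)"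

lemma ev_N: "degree p \<le> N \<Longrightarrow> ev p = (\<Sum>i\<le>N. ecA (coeff p i) * T ^ i)"
  unfolding ev_def by (rule sum.mono_neutral_left) (auto simp: coeff_eq_0)

lemma ev_add: "ev (p + q) = ev p + ev q"
proof -
  let ?N = "max (degree p) (degree q)"
  have "degree (p + q) \<le> ?N" by (rule degree_add_le) auto
  then show ?thesis
    by (simp add: ev_N[of _ ?N] coeff_add ecA_add distrib_right sum.distrib)
qed
lemma ev_0[simp]: "ev 0 = 0" by (simp add: ev_def)
lemma ev_uminus: "ev (- p) = - ev p"
  using ev_add[of p "- p"] by (simp add: add_eq_0_iff2)
lemma ev_diff: "ev (p - q) = ev p - ev q"
  using ev_add[of p "- q"] by (simp add: ev_uminus)

lemma ev_py: "ev (p * py) = ev p * T"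
proof -
  have "degree (p * py) \<le> Suc (degree p)"
    by (simp add: py_def degree_mult_le)
  then have "ev (p * py) = (\<Sum>i\<le>Suc (degree p). ecA (coeff (p * py) i) * T ^ i)"
    by (rule ev_N)
  also have "\<dots> = (\<Sum>i\<le>degree p. ecA (coeff p i) * T ^ Suc i)"
    by (subst sum.atMost_Suc_shift) (simp add: coeff_mult_py del: power_Suc)
  also have "\<dots> = ev p * T"
    by (simp add: ev_def sum_distrib_right mult.assoc power_Suc2 del: power_Suc)
  finally show ?thesis .
qed

lemma ev_pc: "ev (p * pc) = ev p * (- K)"
proof -
  have "degree (p * pc) \<le> degree p"
    by (simp add: pc_def)
  then have "ev (p * pc) = (\<Sum>i\<le>degree p. ecA (coeff (p * pc) i) * T ^ i)"
    by (rule ev_N)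
  also have "\<dots> = (\<Sum>i\<le>degree p. ecA (coeff p i) * T ^ i * (- K))"
  proof (rule sum.cong[OF refl])
    fix i
    have kt: "(- K) * T ^ i = T ^ i * (- K)" using K_Tpow[of i] by simp
    have "coeff (p * pc) i = pCons 0 (coeff p i)" by (simp add: coeff_mult_pc)
    then have "ecA (coeff (p * pc) i) * T ^ i = ecA (coeff p i) * ((- K) * T ^ i)"
      by (simp only: ecA_X mult.assoc)
    also have "\<dots> = ecA (coeff p i) * T ^ i * (- K)" by (simp only: kt mult.assoc)
    finally show "ecA (coeff (p * pc) i) * T ^ i = ecA (coeff p i) * T ^ i * (- K)" .
  qed
  also have "\<dots> = ev p * (- K)" by (simp add: ev_def sum_distrib_right sum_negf)
  finally show ?thesis .
qed

lemma ev_1[simp]: "ev 1 = 1" by (simp add: ev_def)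

lemma ev_py_pow: "ev (py ^ m) = T ^ m"
proof (induction m)
  case (Suc m)
  have "py ^ Suc m = py ^ m * py" by (simp add: mult.commute)
  then show ?case using Suc by (simp only: ev_py power_Suc2)
qed simp

lemma ev_al_be: "ev (al m) = alA m \<and> ev (be m) = beA m"
proof (induction m)
  case 0 then show ?case by (simp add: al_0 be_0 alA_0 beA_0)
next
  case (Suc m)
  have "ev (al (Suc m)) = ev (al m) * T + (ev (be m) * T - ev (be m) * (- K))"
    unfolding al_Suc right_diff_distrib ev_add ev_diff ev_py ev_pc ..
  also have "\<dots> = alA (Suc m)" using Suc by (simp add: alA_Suc algebra_simps)
  finally have a: "ev (al (Suc m)) = alA (Suc m)" .
  have "ev (be (Suc m)) = T ^ m - ev (al m) - ev (al m) + (ev (be m) * T - ev (be m))"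
    unfolding be_Suc right_diff_distrib ev_add ev_diff ev_py ev_py_pow by simp
  also have "\<dots> = beA (Suc m)" using Suc by (simp add: beA_Suc algebra_simps)
  finally show ?case using a by simp
qed

lemma ev_PP: "ev (PP m) = Y1 * T ^ m * Y1 + Y2 * T ^ m * Y2 + Y3 * T ^ m * Y3"
proof -
  have e: "PP m = - (py ^ m * pc) + (al m * py + al m * pc) + be m * py"
    by (simp add: PP_al algebra_simps)
  have "ev (PP m) = - (T ^ m * (- K)) + (alA m * T + alA m * (- K)) + beA m * T"
    unfolding e ev_add ev_uminus ev_py ev_pc ev_py_pow using ev_al_be by simp
  also have "\<dots> = T ^ m * K + alA m * (T - K) + beA m * T" by (simp add: algebra_simps)
  finally show ?thesis using S_formula by simp
qed

definition tt :: F2 where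
  "tt = L1 (XX 1) * L2 (XX 1) + L1 (XX 2) * L2 (XX 2) + L1 (XX 3) * L2 (XX 3)"

lemma sA_L12: "L1 (sA a) * L2 (sA a) = - (L1 (XX a) * L2 (XX a))"
  by (simp add: sA_def XX_def L1_single L2_single mult_single single_uminus[symmetric])

lemma T_abs: "T = abs_A (- tt)"
  unfolding T_def W1_def W2_def W3_def Y1_def Y2_def Y3_def W_def Y_def tt_def
  by (simp add: absA_mult[symmetric] absA_add[symmetric] absA_uminus[symmetric] sA_L12)

lemma Y_abs: "abs_A (L2 (XX a)) = scA \<i> * Y a"
proof -
  have "L2 (XX a) = sc \<i> * L2 (sA a)"
    by (simp add: XX_def sA_def L2_single sc_single)
  then show ?thesis by (simp add: Y_def scA_def absA_mult L2_sc[symmetric] L2_mult)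
qed

lemma neg1_pow_comm: "(- 1) ^ m * x = x * ((- 1) ^ m :: 'a::ring_1)"
proof (induction m)
  case (Suc m)
  have "(- 1) ^ Suc m * x = - ((- 1) ^ m * x)" by simp
  also have "\<dots> = - (x * (- 1) ^ m)" using Suc by simp
  also have "\<dots> = x * (- 1) ^ Suc m" by (simp add: power_Suc2)
  finally show ?case .
qed simp

lemma central_rearr:
  fixes c s y t :: "'a::ring_1"
  assumes c: "\<And>x. c * x = x * c" and s: "\<And>x. s * x = x * s"
  shows "(c * y) * (s * t) * (c * y) = (c * c) * (s * (y * t * y))"
proof -
  have "(c * y) * (s * t) * (c * y) = c * (y * (s * (t * (c * y))))" by (simp only: mult.assoc)
  also have "t * (c * y) = c * (t * y)" by (metis c mult.assoc)
  also have "s * (c * (t * y)) = c * (s * (t * y))" by (metis c mult.assoc)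
  also have "y * (c * (s * (t * y))) = c * (y * (s * (t * y)))" by (metis c mult.assoc)
  also have "y * (s * (t * y)) = s * (y * (t * y))" by (metis s mult.assoc)
  finally show ?thesis by (simp only: mult.assoc)
qed


lemma A_main: "abs_A (L2 (XX 1) * tt ^ m * L2 (XX 1) + L2 (XX 2) * tt ^ m * L2 (XX 2) + L2 (XX 3) * tt ^ m * L2 (XX 3))
   = scA ((- 1) ^ m) * ev (- PP m)"
proof -
  have tm: "abs_A (tt ^ m) = (- 1) ^ m * T ^ m"
  proof -
    have "abs_A tt = - T" unfolding T_abs absA_uminus by simp
    then have "abs_A (tt ^ m) = (- T) ^ m" by (simp only: absA_power)
    then show ?thesis by (simp only: power_minus[of T])
  qed
  have sc_pow: "scA ((- 1) ^ m) = (- 1) ^ m" by (induction m) (simp_all add: scA_mult scA_uminus)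
  have one: "abs_A (L2 (XX a) * tt ^ m * L2 (XX a)) = - ((- 1) ^ m * (Y a * T ^ m * Y a))" for a
  proof -
    have "abs_A (L2 (XX a) * tt ^ m * L2 (XX a)) = (scA \<i> * Y a) * ((- 1) ^ m * T ^ m) * (scA \<i> * Y a)"
      by (simp add: absA_mult Y_abs tm)
    also have "\<dots> = (scA \<i> * scA \<i>) * ((- 1) ^ m * (Y a * T ^ m * Y a))"
      by (rule central_rearr[OF scA_comm neg1_pow_comm])
    also have "\<dots> = - ((- 1) ^ m * (Y a * T ^ m * Y a))"
      by (simp add: scA_mult[symmetric] scA_uminus)
    finally show ?thesis .
  qed
  show ?thesis
    unfolding absA_add one ev_uminus ev_PP sc_pow
    by (simp add: W1_def Y1_def Y2_def Y3_def algebra_simps)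
qed

definition LHSF :: "nat \<Rightarrow> F2" where
  "LHSF m = L2 (XX 1) * tt ^ m * L2 (XX 1) + L2 (XX 2) * tt ^ m * L2 (XX 2) + L2 (XX 3) * tt ^ m * L2 (XX 3)"
definition RHSF :: "nat \<Rightarrow> F2" where
  "RHSF m = sc ((- 1) ^ m) * (\<Sum>i\<le>m. L1 (evc (u_poly i m)) * (- tt) ^ i)"

lemma degree_mPP: "degree (- PP m) \<le> m"
  by (rule degree_le) (simp add: PP_deg)

lemma scA_pow: "scA (a ^ i) = scA a ^ i" by (induction i) (simp_all add: scA_mult)

lemma J_main: "LHSF m - RHSF m \<in> J"
proof (rule absA_eqD)
  have "abs_A (- tt) = T" by (simp add: T_abs)
  then have "abs_A (RHSF m) = scA ((- 1) ^ m) * (\<Sum>i\<le>m. ecA (coeff (- PP m) i) * T ^ i)"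
    by (simp add: RHSF_def absA_mult absA_sum absA_power ecA_def u_poly_PP scA_def[symmetric])
  also have "\<dots> = scA ((- 1) ^ m) * ev (- PP m)" by (simp add: ev_N[OF degree_mPP])
  also have "\<dots> = abs_A (LHSF m)" unfolding LHSF_def by (rule A_main[symmetric])
  finally show "abs_A (LHSF m) = abs_A (RHSF m)" by simp
qed

lemma sc_pow_F2: "sc (a ^ i) = (sc a ^ i :: F2)" by (induction i) (simp_all add: sc_mult[symmetric])
lemma sc_pow_F: "sc (a ^ i) = (sc a ^ i :: F)" by (induction i) (simp_all add: sc_mult[symmetric])

lemma neg_pow_F2: "(- x) ^ i = sc ((- 1) ^ i) * (x ^ i :: F2)"
  by (simp add: sc_pow_F2 sc_minus power_minus[of x])

lemma Lam_main: "Lam (Suc n) (tt ^ m) - sc ((- 1) ^ m) * (\<Sum>i\<le>m. evc (u_poly i m) * (sc ((- 1) ^ i) * Lam n (tt ^ i))) \<in> IFg"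
proof -
  have "Lam n (LHSF m - RHSF m) \<in> IFg" by (rule J_Lam[OF J_main])
  moreover have "Lam n (LHSF m) = Lam (Suc n) (tt ^ m)" unfolding LHSF_def by (rule Lam_Om1)
  moreover have "Lam n (RHSF m) = sc ((- 1) ^ m) * (\<Sum>i\<le>m. evc (u_poly i m) * (sc ((- 1) ^ i) * Lam n (tt ^ i)))"
    by (simp add: RHSF_def Lam_sc Lam_sum Lam_L1 neg_pow_F2 mult.assoc)
  ultimately show ?thesis by (simp add: Lam_diff)
qed

definition Ls :: "nat \<Rightarrow> nat list set" where
  "Ls k = {xs. length xs = k \<and> set xs \<subseteq> {1,2,3}}"

lemma Ls_0: "Ls 0 = {[]}" by (auto simp: Ls_def)

lemma Ls_Suc: "Ls (Suc k) = (\<lambda>(a, xs). a # xs) ` ({1,2,3} \<times> Ls k)"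
proof
  show "Ls (Suc k) \<subseteq> (\<lambda>(a, xs). a # xs) ` ({1,2,3} \<times> Ls k)"
  proof
    fix ys assume "ys \<in> Ls (Suc k)"
    then obtain a xs where "ys = a # xs" "a \<in> {1,2,3}" "xs \<in> Ls k"
      by (cases ys) (auto simp: Ls_def)
    then show "ys \<in> (\<lambda>(a, xs). a # xs) ` ({1,2,3} \<times> Ls k)" by force
  qed
qed (auto simp: Ls_def)

lemma inj_Cons: "inj_on (\<lambda>(a, xs). a # xs) S" by (auto simp: inj_on_def)

lemma finite_Ls: "finite (Ls k)"
  by (induction k) (simp_all add: Ls_0 Ls_Suc)

lemma sum_Ls_Suc: "(\<Sum>ys\<in>Ls (Suc k). f ys) = (\<Sum>a\<in>{1,2,3}. \<Sum>xs\<in>Ls k. f (a # xs))"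
proof -
  have "(\<Sum>ys\<in>Ls (Suc k). f ys) = (\<Sum>p\<in>{1,2,3} \<times> Ls k. f ((\<lambda>(a, xs). a # xs) p))"
    unfolding Ls_Suc by (rule sum.reindex[OF inj_Cons, unfolded comp_def])
  also have "\<dots> = (\<Sum>a\<in>{1,2,3}. \<Sum>xs\<in>Ls k. f (a # xs))"
    by (simp add: sum.cartesian_product split_def)
  finally show ?thesis .
qed

lemma sum3: "(\<Sum>a\<in>{1,2,3::nat}. f a) = f 1 + f 2 + f 3" by (simp add: add.assoc)

lemma tt_sum: "tt = (\<Sum>a\<in>{1,2,3}. Poly_Mapping.single (Wd [a], Wd [a]) 1)"
  by (simp only: sum3) (simp add: tt_def XX_def L1_single L2_single mult_single)

lemma tt_pow: "tt ^ m = (\<Sum>xs\<in>Ls m. Poly_Mapping.single (Wd xs, Wd xs) 1)"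
proof (induction m)
  case 0 then show ?case by (simp add: Ls_0 zero_wd_def[symmetric] zero_prod_def[symmetric] flip: one_poly_mapping.abs_eq)
next
  case (Suc m)
  have "tt ^ Suc m = tt * tt ^ m" by simp
  also have "\<dots> = (\<Sum>a\<in>{1,2,3}. \<Sum>xs\<in>Ls m. Poly_Mapping.single (Wd [a], Wd [a]) 1 * Poly_Mapping.single (Wd xs, Wd xs) 1)"
    unfolding Suc by (subst tt_sum, subst sum_distrib_right, simp only: sum_distrib_left)
  also have "\<dots> = (\<Sum>a\<in>{1,2,3}. \<Sum>xs\<in>Ls m. Poly_Mapping.single (Wd (a # xs), Wd (a # xs)) 1)"
    by (simp add: mult_single)
  also have "\<dots> = (\<Sum>xs\<in>Ls (Suc m). Poly_Mapping.single (Wd xs, Wd xs) 1)"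
    by (simp add: sum_Ls_Suc)
  finally show ?case .
qed

lemma Om1_sum: "Om1 (sum f S) = (\<Sum>x\<in>S. Om1 (f x))"
  by (induction S rule: infinite_finite_induct) (simp_all add: Om1_add)

lemma Om1_single: "Om1 (Poly_Mapping.single (Wd v) 1) = (\<Sum>a\<in>{1,2,3}. Poly_Mapping.single (Wd (a # v @ [a])) 1)"
  by (simp only: sum3) (simp add: Om1_def XX_def mult_single)

lemma Om_single: "Om n (Poly_Mapping.single (Wd v) 1) = (\<Sum>ys\<in>Ls n. Poly_Mapping.single (Wd (ys @ v @ rev ys)) 1)"
proof (induction n)
  case 0 then show ?case by (simp add: Om_def Ls_0)
next
  case (Suc n)
  have "Om (Suc n) (Poly_Mapping.single (Wd v) 1) = Om1 (Om n (Poly_Mapping.single (Wd v) 1))" by (rule Om_Suc')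
  also have "\<dots> = (\<Sum>ys\<in>Ls n. \<Sum>a\<in>{1,2,3}. Poly_Mapping.single (Wd (a # ys @ v @ rev ys @ [a])) 1)"
    by (simp add: Suc Om1_sum Om1_single)
  also have "\<dots> = (\<Sum>a\<in>{1,2,3}. \<Sum>ys\<in>Ls n. Poly_Mapping.single (Wd ((a # ys) @ v @ rev (a # ys))) 1)"
    by (subst sum.swap) simp
  also have "\<dots> = (\<Sum>ys\<in>Ls (Suc n). Poly_Mapping.single (Wd (ys @ v @ rev ys)) 1)"
    by (simp only: sum_Ls_Suc)
  finally show ?case .
qed

lemma Lam_tt: "Lam n (tt ^ m) = (\<Sum>xs\<in>Ls m. \<Sum>ys\<in>Ls n. Poly_Mapping.single (Wd (xs @ ys @ xs @ rev ys)) 1)"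
  by (simp add: tt_pow Lam_sum Lam_single Om_single sum_distrib_left mult_single)

lemma pr_Lam_tt: "pr (Lam n (tt ^ m)) = Lam n (tt ^ m)"
proof -
  have "pr (Poly_Mapping.single (Wd (xs @ ys @ xs @ rev ys)) 1) = Poly_Mapping.single (Wd (xs @ ys @ xs @ rev ys)) 1"
    if "xs \<in> Ls m" "ys \<in> Ls n" for xs ys
    using that by (simp add: pr_single good_def Ls_def)
  then show ?thesis by (simp add: Lam_tt pr_sum)
qed

lemma upt_shift: "map ((+) m) [0..<n] = [m..<m + n]"
  by (induction n) auto

lemma set_split_diag: "set (split_diag m n) = {0..<m + n}"
  by (auto simp: split_diag_def upt_shift)

lemma map_split: "map f (split_diag m n) = map f [0..<m] @ map f [m..<m + n] @ map f [0..<m] @ rev (map f [m..<m + n])"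
  by (simp add: split_diag_def upt_shift rev_map)

definition gmap :: "nat \<Rightarrow> nat \<Rightarrow> (nat \<Rightarrow> nat) \<Rightarrow> nat list \<times> nat list" where
  "gmap m n f = (map f [0..<m], map f [m..<m + n])"

lemma gmap_inj: "inj_on (gmap m n) (PiE {0..<m + n} (\<lambda>_. {1,2,3::nat}))"
proof (rule inj_onI)
  fix f g :: "nat \<Rightarrow> nat"
  assume f: "f \<in> PiE {0..<m + n} (\<lambda>_. {1,2,3})" and g: "g \<in> PiE {0..<m + n} (\<lambda>_. {1,2,3})"
    and e: "gmap m n f = gmap m n g"
  have "map f [0..<m] = map g [0..<m]" "map f [m..<m + n] = map g [m..<m + n]"
    using e unfolding gmap_def by simp_all
  then have a: "\<forall>x\<in>{0..<m}. f x = g x" and b: "\<forall>x\<in>{m..<m + n}. f x = g x"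
    by (simp_all only: map_eq_conv set_upt)
  show "f = g"
  proof (rule ext)
    fix k
    show "f k = g k"
    proof (cases "k < m + n")
      case True
      then show ?thesis using a b by (cases "k < m") auto
    next
      case False
      then have k: "k \<notin> {0..<m + n}" by simp
      show ?thesis using PiE_arb[OF f k] PiE_arb[OF g k] by (rule trans[OF _ sym])
    qed
  qed
qed

lemma gmap_image: "gmap m n ` (PiE {0..<m + n} (\<lambda>_. {1,2,3::nat})) = Ls m \<times> Ls n"
proof
  show "gmap m n ` PiE {0..<m + n} (\<lambda>_. {1,2,3}) \<subseteq> Ls m \<times> Ls n"
  proof
    fix p assume "p \<in> gmap m n ` PiE {0..<m + n} (\<lambda>_. {1,2,3})"
    then obtain f where f: "f \<in> PiE {0..<m + n} (\<lambda>_. {1,2,3::nat})" and p: "p = gmap m n f" by blast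
    have "f k \<in> {1,2,3}" if "k < m + n" for k
      using PiE_mem[OF f, of k] that by simp
    then have A: "f k \<in> {1,2,3}" if "k < m" for k using that by (meson trans_less_add1)
    have B: "f k \<in> {1,2,3}" if "k \<in> {m..<m + n}" for k using that \<open>\<And>k. k < m + n \<Longrightarrow> f k \<in> {1,2,3}\<close> by simp
    have "set (map f [0..<m]) \<subseteq> {1,2,3}"
    proof (rule subsetI)
      fix x assume "x \<in> set (map f [0..<m])"
      then obtain k where k: "k < m" "x = f k" by auto
      show "x \<in> {1,2,3}" using A[OF k(1)] k(2) by simp
    qed
    moreover have "set (map f [m..<m + n]) \<subseteq> {1,2,3}"
    proof (rule subsetI)
      fix x assume "x \<in> set (map f [m..<m + n])"
      then obtain k where k: "k \<in> {m..<m + n}" "x = f k" by auto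
      show "x \<in> {1,2,3}" using B[OF k(1)] k(2) by simp
    qed
    ultimately show "p \<in> Ls m \<times> Ls n" unfolding p gmap_def Ls_def by simp
  qed
next
  show "Ls m \<times> Ls n \<subseteq> gmap m n ` PiE {0..<m + n} (\<lambda>_. {1,2,3})"
  proof
    fix p assume "p \<in> Ls m \<times> Ls n"
    then obtain xs ys where p: "p = (xs, ys)" and xs: "length xs = m" "set xs \<subseteq> {1,2,3}"
      and ys: "length ys = n" "set ys \<subseteq> {1,2,3}" by (auto simp: Ls_def)
    define f :: "nat \<Rightarrow> nat" where "f = (\<lambda>k. if k < m + n then (if k < m then xs ! k else ys ! (k - m)) else undefined)"
    have "f k \<in> {1,2,3}" if "k \<in> {0..<m + n}" for k
    proof (cases "k < m")
      case True
      then have "xs ! k \<in> set xs" using xs by simp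
      then have "xs ! k \<in> {1,2,3}" using xs(2) by blast
      moreover have "f k = xs ! k" using that True by (simp add: f_def)
      ultimately show ?thesis by simp
    next
      case False
      then have "ys ! (k - m) \<in> set ys" using ys that by simp
      then have "ys ! (k - m) \<in> {1,2,3}" using ys(2) by blast
      moreover have "f k = ys ! (k - m)" using that False by (simp add: f_def)
      ultimately show ?thesis by simp
    qed
    moreover have "f \<in> extensional {0..<m + n}" by (simp add: f_def extensional_def)
    ultimately have fP: "f \<in> PiE {0..<m + n} (\<lambda>_. {1,2,3})" by (simp only: PiE_iff) blast
    have "map f [0..<m] = xs" using xs by (intro nth_equalityI) (auto simp: f_def)
    moreover have "map f [m..<m + n] = ys" using ys by (intro nth_equalityI) (auto simp: f_def)
    ultimately have "p = gmap m n f" by (simp add: p gmap_def)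
    then show "p \<in> gmap m n ` PiE {0..<m + n} (\<lambda>_. {1,2,3})" using fP by blast
  qed
qed

lemma gmap_bij: "bij_betw (gmap m n) (PiE {0..<m + n} (\<lambda>_. {1,2,3::nat})) (Ls m \<times> Ls n)"
  unfolding bij_betw_def using gmap_inj gmap_image by blast
lemma tofa_Lam_tt: "tofa (Lam n (tt ^ m)) = w_sl2 (split_diag m n)"
proof (rule ext)
  fix w
  have "tofa (Lam n (tt ^ m)) w = (\<Sum>xs\<in>Ls m. \<Sum>ys\<in>Ls n. if xs @ ys @ xs @ rev ys = w then 1 else 0)"
    by (simp add: tofa_def Lam_tt lookup_sum lookup_single when_def)
  also have "\<dots> = (\<Sum>p\<in>Ls m \<times> Ls n. if fst p @ snd p @ fst p @ rev (snd p) = w then 1 else 0)"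
    by (simp add: sum.cartesian_product split_def)
  also have "\<dots> = (\<Sum>f\<in>PiE {0..<m + n} (\<lambda>_. {1,2,3}). (\<lambda>p. if fst p @ snd p @ fst p @ rev (snd p) = w then 1 else 0) (gmap m n f))"
    by (rule sum.reindex_bij_betw[OF gmap_bij, symmetric])
  also have "\<dots> = w_sl2 (split_diag m n) w"
    by (simp add: w_sl2_def set_split_diag map_split gmap_def)
  finally show "tofa (Lam n (tt ^ m)) w = w_sl2 (split_diag m n) w" .
qed

lemma tofa_1: "tofa 1 = fa_one"
proof -
  have e: "(1::F) = Poly_Mapping.single (Wd []) 1" by (simp add: zero_wd_def[symmetric])
  show ?thesis unfolding tofa_def fa_one_def fa_mono_def
    by (subst e) (auto simp: lookup_single when_def)
qed

lemma tofa_CC: "tofa CC = casimir"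
  by (simp add: CC_def casimir_def tofa_add tofa_mult tofa_XX)

lemma tofa_CC_pow: "tofa (CC ^ k) = fa_pow casimir k"
  by (induction k) (simp_all add: tofa_1 tofa_mult tofa_CC)

lemma tofa_sum: "tofa (sum f S) = (\<lambda>w. \<Sum>x\<in>S. tofa (f x) w)"
  by (simp add: tofa_def lookup_sum)

lemma tofa_sc: "tofa (sc z * p) = (\<lambda>w. z * tofa p w)"
  by (simp add: tofa_def lookup_sc_mult)

lemma tofa_evc: "tofa (evc q) = eval_c q"
  by (simp add: evc_def eval_c_def tofa_sum tofa_sc tofa_CC_pow)

lemma pr_evc: "pr (evc q) = evc q"
  by (simp add: evc_def pr_sum pr_mult pr_power)

lemma neg1_lemma: "i \<le> m \<Longrightarrow> (- 1) ^ m * (- 1) ^ i = ((- 1) ^ (m - i) :: complex)"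
proof -
  assume "i \<le> m"
  then have "(- 1 :: complex) ^ m = (- 1) ^ (m - i) * (- 1) ^ i" by (simp add: power_add[symmetric])
  then show ?thesis by (simp add: mult.assoc power_mult_distrib[symmetric])
qed

lemma evc_top: "evc (u_poly m m) = CC - sc (of_nat (m * (m + 1)) / 2)"
proof -
  have u: "u_poly m m = [: - (of_nat (m * (m + 1)) / 2), 1 :]"
    by (simp add: u_poly_PP PP_top)
  have "evc (u_poly m m) = (\<Sum>j\<le>1. sc (coeff (u_poly m m) j) * CC ^ j)"
    by (rule evc_N) (simp add: u)
  also have "\<dots> = CC - sc (of_nat (m * (m + 1)) / 2)"
    by (simp add: u sc_minus)
  finally show ?thesis .
qed

definition EE :: "nat \<Rightarrow> nat \<Rightarrow> F" where
  "EE m n = Lam (Suc n) (tt ^ m) - (CC - sc (of_nat (m * (m + 1)) / 2)) * Lam n (tt ^ m)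
     - (\<Sum>i<m. sc ((- 1) ^ (m - i)) * (evc (u_poly i m) * Lam n (tt ^ i)))"

lemma EE_IFg: "EE m n \<in> IFg"
proof -
  let ?L = "\<lambda>i. Lam n (tt ^ i)"
  have t: "sc ((- 1) ^ m) * (evc (u_poly i m) * (sc ((- 1) ^ i) * ?L i)) = sc ((- 1) ^ (m - i)) * (evc (u_poly i m) * ?L i)"
    if "i \<le> m" for i
  proof -
    have "sc ((- 1) ^ m) * (evc (u_poly i m) * (sc ((- 1) ^ i) * ?L i))
       = sc ((- 1) ^ m) * (sc ((- 1) ^ i) * (evc (u_poly i m) * ?L i))"
      by (simp only: sc_left_comm[of "evc (u_poly i m)"])
    also have "\<dots> = sc ((- 1) ^ (m - i)) * (evc (u_poly i m) * ?L i)"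
      by (simp only: mult.assoc[symmetric] sc_mult neg1_lemma[OF that])
    finally show ?thesis .
  qed
  have "sc ((- 1) ^ m) * (\<Sum>i\<le>m. evc (u_poly i m) * (sc ((- 1) ^ i) * ?L i))
     = (\<Sum>i\<le>m. sc ((- 1) ^ (m - i)) * (evc (u_poly i m) * ?L i))"
    by (simp add: sum_distrib_left t)
  also have "\<dots> = (\<Sum>i<m. sc ((- 1) ^ (m - i)) * (evc (u_poly i m) * ?L i)) + (CC - sc (of_nat (m * (m + 1)) / 2)) * ?L m"
    by (simp add: lessThan_Suc_atMost[symmetric] evc_top)
  finally have "Lam (Suc n) (tt ^ m) - sc ((- 1) ^ m) * (\<Sum>i\<le>m. evc (u_poly i m) * (sc ((- 1) ^ i) * ?L i)) = EE m n"
    unfolding EE_def by (simp only: diff_diff_eq add.commute)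
  then show ?thesis using Lam_main[of n m] by simp
qed

lemma pr_EE: "pr (EE m n) = EE m n"
  by (simp add: EE_def pr_minus pr_mult pr_sum pr_Lam_tt pr_evc)

lemma tofa_EE: "tofa (EE m n) = fa_sub (fa_sub (w_sl2 (split_diag m (Suc n)))
                      (fa_mult (fa_sub casimir (fa_scal (of_nat (m * (m + 1)) / 2) fa_one))
                               (w_sl2 (split_diag m n))))
              (\<lambda>w. \<Sum>i<m. ((-1) ^ (m - i)) * fa_mult (eval_c (u_poly i m)) (w_sl2 (split_diag i n)) w)"
proof -
  have sc1: "tofa (sc z) = fa_scal z fa_one" for z
    using tofa_sc_mult[of z 1] by (simp add: tofa_1)
  show ?thesis
    by (simp only: EE_def tofa_minus tofa_sum tofa_sc)
      (simp add: tofa_mult tofa_Lam_tt tofa_evc tofa_minus tofa_CC sc1)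
qed

theorem lemma15:
  fixes m n :: nat
  shows "U_eq (w_sl2 (split_diag m 0)) (w_sl2 (complete_diag m))
       \<and> U_eq (fa_sub (w_sl2 (split_diag m (Suc n)))
                      (fa_mult (fa_sub casimir (fa_scal (of_nat (m * (m + 1)) / 2) fa_one))
                               (w_sl2 (split_diag m n))))
              (\<lambda>w. \<Sum>i<m. ((-1) ^ (m - i)) * fa_mult (eval_c (u_poly i m)) (w_sl2 (split_diag i n)) w)"
proof
  have "split_diag m 0 = complete_diag m" by (simp add: split_diag_def complete_diag_def)
  moreover have "fa_sub x x = (\<lambda>_. 0)" for x by (simp add: fa_sub_def)
  ultimately show "U_eq (w_sl2 (split_diag m 0)) (w_sl2 (complete_diag m))"
    by (simp add: U_eq_def sl2_ideal.zero)
next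
  have "tofa (pr (EE m n)) \<in> sl2_ideal" using EE_IFg by (simp add: IFg_def IF_def)
  then show "U_eq (fa_sub (w_sl2 (split_diag m (Suc n)))
                      (fa_mult (fa_sub casimir (fa_scal (of_nat (m * (m + 1)) / 2) fa_one))
                               (w_sl2 (split_diag m n))))
              (\<lambda>w. \<Sum>i<m. ((-1) ^ (m - i)) * fa_mult (eval_c (u_poly i m)) (w_sl2 (split_diag i n)) w)"
    unfolding U_eq_def by (simp only: pr_EE tofa_EE)
qed

end
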